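(* Let $T$ be a finite group and $G=T\wr\mathfrak{S}_\infty$. Let $V,W$ be finite-dimensional complex Hilbert spaces, let $\pi$ be a unitary representation of $T$ on $W\otimes V$, and let $R\in End(V\otimes V)$ be an involutive $R$-matrix. Then $(\pi,R)$ is a Yang-Baxter couple if and only if $R$ satisfies the Yang-Baxter equation and $(\pi,R)$ satisfies the extended reflection equation $$\forall t,t'\in T,\qquad R_1\pi(t)R_1\pi(t')=\pi(t')R_1\pi(t)R_1 .$$
   Context: $\mathfrak{S}_\infty$ is the group of finitary permutations of $\mathbb{N}=\{1,2,\dots\}$, generated by $\sigma_i=(i\ i{+}1)$, $i\ge1$. $G=T\wr\mathfrak{S}_\infty=\left(\bigcup_n T^n\right)\rtimes\mathfrak{S}_\infty$, where $\bigcup_nT^n$ is the group of sequences $d=(t_i)_{i\ge1}$ in $T$ with $t_i=e_T$ for all but finitely many $i$ (coordinatewise product), and $\mathfrak{S}_\infty$ acts by permuting coordinates. Elements are written $g=(d,\sigma)$. An involutive $R$-matrix is $R\in End(V\otimes V)$ with $R^2=1\otimes1$ and $(R\otimes1)(1\otimes R)(R\otimes1)=(1\otimes R)(R\otimes1)(1\otimes R)$ in $End(V^{\otimes3})$. Consider the algebra $End(W)\otimes End(V)^{\otimes\infty}$ acting on $W\otimes V\otimes V\otimes\cdots$; $R_i$ denotes $R$ acting on the $i$-th and $(i{+}1)$-th copies of $V$ (identity elsewhere, including on $W$), so $R_1=1\otimes R$; $\pi(s)$ denotes $\pi(s)$ acting on $W\otimes$(first copy of $V$), tensored with the identity on the other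 factors. For $g=(d,\sigma)\in G$ put $\rho_{\pi,R}(g):=\rho_{\pi,R}((d,\mathrm{id}))\,\rho_{\pi,R}((1,\sigma))$, where $\rho_{\pi,R}((1,\sigma))$ is the Yang-Baxter representation of $\mathfrak{S}_\infty$ determined by $\sigma_i\mapsto R_i$, and for $d=(t_i)_i$, $$\rho_{\pi,R}((d,\mathrm{id})):=\pi(t_1)\,\big(R_1\pi(t_2)R_1\big)\cdots\big(R_{n-1}\cdots R_1\pi(t_n)R_1\cdots R_{n-1}\big)\cdots.$$ $(\pi,R)$ is called a Yang-Baxter couple if $g\mapsto\rho_{\pi,R}(g)$ defines a group representation of $G$ on $W\otimes V^{\otimes\infty}$. *)

theory Defs
  imports Complex_Main "HOL-Algebra.Group" "HOL-Combinatorics.Permutations"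
begin

(* Matrices on a finite-dimensional complex Hilbert space, written in an
   orthonormal basis indexed by a finite type 'i.                       *)

definition mm :: "('i::finite \<Rightarrow> 'i \<Rightarrow> complex) \<Rightarrow> ('i \<Rightarrow> 'i \<Rightarrow> complex) \<Rightarrow> 'i \<Rightarrow> 'i \<Rightarrow> complex" where
  "mm A B = (\<lambda>x y. \<Sum>z\<in>UNIV. A x z * B z y)"

definition mid :: "'i::finite \<Rightarrow> 'i \<Rightarrow> complex" where
  "mid = (\<lambda>x y. if x = y then 1 else 0)"

definition madj :: "('i::finite \<Rightarrow> 'i \<Rightarrow> complex) \<Rightarrow> 'i \<Rightarrow> 'i \<Rightarrow> complex" where
  "madj A = (\<lambda>x y. cnj (A y x))"

definition unitary_rep :: "('a, 'b) monoid_scheme \<Rightarrow> ('a \<Rightarrow> ('i::finite \<Rightarrow> 'i \<Rightarrow> complex)) \<Rightarrow> bool" where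
  "unitary_rep T \<pi> \<longleftrightarrow>
     \<pi> \<one>\<^bsub>T\<^esub> = mid \<and>
     (\<forall>s\<in>carrier T. \<forall>t\<in>carrier T. \<pi> (s \<otimes>\<^bsub>T\<^esub> t) = mm (\<pi> s) (\<pi> t)) \<and>
     (\<forall>t\<in>carrier T. mm (madj (\<pi> t)) (\<pi> t) = mid)"

definition R12 :: "('v \<times> 'v \<Rightarrow> 'v \<times> 'v \<Rightarrow> complex) \<Rightarrow> 'v \<times> 'v \<times> 'v \<Rightarrow> 'v \<times> 'v \<times> 'v \<Rightarrow> complex" where
  "R12 R = (\<lambda>(a,b,c) (a',b',c'). if c = c' then R (a,b) (a',b') else 0)"

definition R23 :: "('v \<times> 'v \<Rightarrow> 'v \<times> 'v \<Rightarrow> complex) \<Rightarrow> 'v \<times> 'v \<times> 'v \<Rightarrow> 'v \<times> 'v \<times> 'v \<Rightarrow> complex" where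
  "R23 R = (\<lambda>(a,b,c) (a',b',c'). if a = a' then R (b,c) (b',c') else 0)"

definition YBE :: "('v::finite \<times> 'v \<Rightarrow> 'v \<times> 'v \<Rightarrow> complex) \<Rightarrow> bool" where
  "YBE R \<longleftrightarrow> mm (R12 R) (mm (R23 R) (R12 R)) = mm (R23 R) (mm (R12 R) (R23 R))"

definition involutive_Rmatrix :: "('v::finite \<times> 'v \<Rightarrow> 'v \<times> 'v \<Rightarrow> complex) \<Rightarrow> bool" where
  "involutive_Rmatrix R \<longleftrightarrow> mm R R = mid \<and> YBE R"

(* Operators on W \<otimes> V^{\<otimes> n}: basis vectors indexed by (a, xs) with
   a :: 'w and xs a list of length n; the k-th copy of V (k = 1..n) is
   list position k-1.  Operators are matrices, zero outside the basis.   *)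

type_synonym ('w, 'v) st = "'w \<times> 'v list"
type_synonym ('w, 'v) lop = "('w, 'v) st \<Rightarrow> ('w, 'v) st \<Rightarrow> complex"

definition states :: "nat \<Rightarrow> ('w::finite, 'v::finite) st set" where
  "states n = UNIV \<times> {xs. length xs = n}"

definition opmul :: "nat \<Rightarrow> ('w::finite, 'v::finite) lop \<Rightarrow> ('w, 'v) lop \<Rightarrow> ('w, 'v) lop" where
  "opmul n A B = (\<lambda>x y. \<Sum>z\<in>states n. A x z * B z y)"

definition opid :: "nat \<Rightarrow> ('w::finite, 'v::finite) lop" where
  "opid n = (\<lambda>x y. if x \<in> states n \<and> x = y then 1 else 0)"

definition opprod :: "nat \<Rightarrow> ('w::finite, 'v::finite) lop list \<Rightarrow> ('w, 'v) lop" where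
  "opprod n As = foldr (opmul n) As (opid n)"

(* R_i : R acting on the i-th and (i+1)-th copies of V, 1 \<le> i \<le> n-1 *)
definition Rop :: "('v \<times> 'v \<Rightarrow> 'v \<times> 'v \<Rightarrow> complex) \<Rightarrow> nat \<Rightarrow> nat \<Rightarrow> ('w::finite, 'v::finite) lop" where
  "Rop R n i = (\<lambda>(a,xs) (b,ys).
     if (a,xs) \<in> states n \<and> (b,ys) \<in> states n \<and> a = b \<and>
        (\<forall>j<n. j \<noteq> i - 1 \<and> j \<noteq> i \<longrightarrow> xs ! j = ys ! j)
     then R (xs ! (i - 1), xs ! i) (ys ! (i - 1), ys ! i) else 0)"

(* an operator on W \<otimes> V acting on W \<otimes> (first copy of V), n \<ge> 1 *)
definition Piop :: "nat \<Rightarrow> ('w \<times> 'v \<Rightarrow> 'w \<times> 'v \<Rightarrow> complex) \<Rightarrow> ('w::finite, 'v::finite) lop" where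
  "Piop n A = (\<lambda>(a,xs) (b,ys).
     if (a,xs) \<in> states n \<and> (b,ys) \<in> states n \<and> tl xs = tl ys
     then A (a, hd xs) (b, hd ys) else 0)"

definition piPos :: "('v \<times> 'v \<Rightarrow> 'v \<times> 'v \<Rightarrow> complex) \<Rightarrow> nat \<Rightarrow> ('w \<times> 'v \<Rightarrow> 'w \<times> 'v \<Rightarrow> complex) \<Rightarrow> nat \<Rightarrow> ('w::finite, 'v::finite) lop" where
  "piPos R n A i = opprod n (map (Rop R n) (rev [1..<i]) @ [Piop n A] @ map (Rop R n) [1..<i])"

definition rhoD :: "('v \<times> 'v \<Rightarrow> 'v \<times> 'v \<Rightarrow> complex) \<Rightarrow> ('a \<Rightarrow> ('w \<times> 'v \<Rightarrow> 'w \<times> 'v \<Rightarrow> complex)) \<Rightarrow> nat \<Rightarrow> (nat \<Rightarrow> 'a) \<Rightarrow> ('w::finite, 'v::finite) lop" where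
  "rhoD R \<pi> n d = opprod n (map (\<lambda>i. piPos R n (\<pi> (d i)) i) [1..<Suc n])"

definition sword :: "nat list \<Rightarrow> nat \<Rightarrow> nat" where
  "sword w = foldr (\<lambda>i f. transpose i (Suc i) \<circ> f) w id"

definition rhoS :: "('v \<times> 'v \<Rightarrow> 'v \<times> 'v \<Rightarrow> complex) \<Rightarrow> nat \<Rightarrow> (nat \<Rightarrow> nat) \<Rightarrow> ('w::finite, 'v::finite) lop" where
  "rhoS R n \<sigma> = opprod n (map (Rop R n)
      (SOME w. set w \<subseteq> {1..<n} \<and> sword w = \<sigma>))"

definition rho :: "('v \<times> 'v \<Rightarrow> 'v \<times> 'v \<Rightarrow> complex) \<Rightarrow> ('a \<Rightarrow> ('w \<times> 'v \<Rightarrow> 'w \<times> 'v \<Rightarrow> complex)) \<Rightarrow> nat \<Rightarrow> (nat \<Rightarrow> 'a) \<times> (nat \<Rightarrow> nat) \<Rightarrow> ('w::finite, 'v::finite) lop" where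
  "rho R \<pi> n g = opmul n (rhoD R \<pi> n (fst g)) (rhoS R n (snd g))"

definition wr_carrier :: "('a, 'b) monoid_scheme \<Rightarrow> nat \<Rightarrow> ((nat \<Rightarrow> 'a) \<times> (nat \<Rightarrow> nat)) set" where
  "wr_carrier T n = {(d, \<sigma>). (\<forall>i. d i \<in> carrier T) \<and> (\<forall>i. i \<notin> {1..n} \<longrightarrow> d i = \<one>\<^bsub>T\<^esub>)
                          \<and> \<sigma> permutes {1..n}}"

definition wr_mult :: "('a, 'b) monoid_scheme \<Rightarrow> (nat \<Rightarrow> 'a) \<times> (nat \<Rightarrow> nat) \<Rightarrow> (nat \<Rightarrow> 'a) \<times> (nat \<Rightarrow> nat) \<Rightarrow> (nat \<Rightarrow> 'a) \<times> (nat \<Rightarrow> nat)" where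
  "wr_mult T g h = ((\<lambda>i. fst g i \<otimes>\<^bsub>T\<^esub> fst h (Hilbert_Choice.inv (snd g) i)), snd g \<circ> snd h)"

(* Since every pair of elements of G lies in some G_n and rho(g) for g \<in> G_n
   lives in End(W \<otimes> V^{\<otimes> n}) \<otimes> 1, this is checked level by level. *)
definition YB_couple :: "('a, 'b) monoid_scheme \<Rightarrow> ('a \<Rightarrow> ('w::finite \<times> 'v::finite \<Rightarrow> 'w \<times> 'v \<Rightarrow> complex)) \<Rightarrow> ('v \<times> 'v \<Rightarrow> 'v \<times> 'v \<Rightarrow> complex) \<Rightarrow> bool" where
  "YB_couple T \<pi> R \<longleftrightarrow>
     (\<forall>n\<ge>1. \<forall>g\<in>wr_carrier T n. \<forall>h\<in>wr_carrier T n.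
        (rho R \<pi> n (wr_mult T g h) :: ('w,'v) lop) = opmul n (rho R \<pi> n g) (rho R \<pi> n h))"

definition ext_reflection :: "('a, 'b) monoid_scheme \<Rightarrow> ('a \<Rightarrow> ('w::finite \<times> 'v::finite \<Rightarrow> 'w \<times> 'v \<Rightarrow> complex)) \<Rightarrow> ('v \<times> 'v \<Rightarrow> 'v \<times> 'v \<Rightarrow> complex) \<Rightarrow> bool" where
  "ext_reflection T \<pi> R \<longleftrightarrow>
     (\<forall>t\<in>carrier T. \<forall>t'\<in>carrier T.
        (opprod 2 [Rop R 2 1, Piop 2 (\<pi> t), Rop R 2 1, Piop 2 (\<pi> t')] :: ('w,'v) lop)
        = opprod 2 [Piop 2 (\<pi> t'), Rop R 2 1, Piop 2 (\<pi> t), Rop R 2 1])"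

end

theory Submission
  imports Defs
begin

definition supp :: "nat \<Rightarrow> ('w::finite,'v::finite) lop \<Rightarrow> bool" where
  "supp n A \<longleftrightarrow> (\<forall>x y. A x y \<noteq> 0 \<longrightarrow> x \<in> states n \<and> y \<in> states n)"

lemma suppD1: "supp n A \<Longrightarrow> x \<notin> states n \<Longrightarrow> A x y = 0" unfolding supp_def by blast
lemma suppD2: "supp n A \<Longrightarrow> y \<notin> states n \<Longrightarrow> A x y = 0" unfolding supp_def by blast
lemma suppI: "(\<And>x y. x \<notin> states n \<or> y \<notin> states n \<Longrightarrow> A x y = 0) \<Longrightarrow> supp n A" unfolding supp_def by blast

lemma finite_states[simp]: "finite (states n :: ('w::finite,'v::finite) st set)"
proof -
  have "{xs::'v list. length xs = n} = {xs. set xs \<subseteq> UNIV \<and> length xs = n}" by auto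
  then have "finite {xs::'v list. length xs = n}" using finite_lists_length_eq[of "UNIV::'v set" n] by simp
  then show ?thesis unfolding states_def by simp
qed

lemma opmul_assoc: "opmul n (opmul n A B) C = opmul n A (opmul n B C)"
  unfolding opmul_def
  apply (rule ext, rule ext) apply (simp add: sum_distrib_left sum_distrib_right mult.assoc) apply (rule sum.swap) done

lemma opid_left: "supp n A \<Longrightarrow> opmul n (opid n) A = A"
proof (rule ext, rule ext)
  fix x y assume s: "supp n A"
  have "(\<Sum>z\<in>states n. (if x \<in> states n \<and> x = z then 1 else 0) * A z y) = (\<Sum>z\<in>states n. if z = x then A x y else 0)"
    by (rule sum.cong) auto
  also have "\<dots> = A x y" using s by (simp add: suppD1 suppD2)
  finally show "opmul n (opid n) A x y = A x y" by (simp add: opmul_def opid_def)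
qed

lemma opid_right: "supp n A \<Longrightarrow> opmul n A (opid n) = A"
proof (rule ext, rule ext)
  fix x y assume s: "supp n A"
  have "(\<Sum>z\<in>states n. A x z * (if z \<in> states n \<and> z = y then 1 else 0)) = (\<Sum>z\<in>states n. if z = y then A x z else 0)"
    by (rule sum.cong) auto
  also have "\<dots> = A x y" using s by (simp add: suppD1 suppD2)
  finally show "opmul n A (opid n) x y = A x y" by (simp add: opmul_def opid_def)
qed

lemma supp_opid[simp]: "supp n (opid n)" by (rule suppI) (auto simp: opid_def)

lemma supp_opmul[simp]: "supp n A \<Longrightarrow> supp n B \<Longrightarrow> supp n (opmul n A B)"
  by (rule suppI) (auto simp: opmul_def suppD1 suppD2)

lemma supp_Rop[simp]: "supp n (Rop R n i)" by (rule suppI) (auto simp: Rop_def)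
lemma supp_Piop[simp]: "supp n (Piop n A)" by (rule suppI) (auto simp: Piop_def)

lemma opprod_Nil[simp]: "opprod n [] = opid n" unfolding opprod_def by simp
lemma opprod_Cons[simp]: "opprod n (A # As) = opmul n A (opprod n As)" unfolding opprod_def by simp

lemma supp_opprod[simp]: "(\<forall>A\<in>set As. supp n A) \<Longrightarrow> supp n (opprod n As)"
  by (induct As) auto

lemma opprod_append: "(\<forall>A\<in>set ys. supp n A) \<Longrightarrow> opprod n (xs @ ys) = opmul n (opprod n xs) (opprod n ys)"
  by (induct xs) (auto simp: opid_left opmul_assoc)

definition Wop :: "nat \<Rightarrow> (('w::finite,'v::finite) st \<Rightarrow> 'k::finite) \<Rightarrow> ('k \<Rightarrow> ('w,'v) st \<Rightarrow> ('w,'v) st) \<Rightarrow> ('k \<Rightarrow> 'k \<Rightarrow> complex) \<Rightarrow> ('w,'v) lop" where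
  "Wop n ex ins M = (\<lambda>x y. if x \<in> states n \<and> y \<in> states n \<and> ins (ex y) x = y then M (ex x) (ex y) else 0)"

lemma supp_Wop[simp]: "supp n (Wop n ex ins M)"
  by (rule suppI) (auto simp: Wop_def)

lemma if01_mult: "(if P then 1 else 0) * (a::complex) = (if P then a else 0)" by simp
lemma mult_if01: "(a::complex) * (if P then 1 else 0) = (if P then a else 0)" by simp

lemma mm_mid_right[simp]: "mm A mid = A"
  unfolding mm_def mid_def by (rule ext, rule ext) (simp add: mult_if01)
lemma mm_mid_left[simp]: "mm mid A = A"
  unfolding mm_def mid_def by (rule ext, rule ext) (simp add: if01_mult)

locale win =
  fixes n :: nat and ex :: "('w::finite,'v::finite) st \<Rightarrow> 'k::finite" and ins :: "'k \<Rightarrow> ('w,'v) st \<Rightarrow> ('w,'v) st"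
  assumes ins_st: "x \<in> states n \<Longrightarrow> ins k x \<in> states n"
    and ex_ins: "x \<in> states n \<Longrightarrow> ex (ins k x) = k"
    and ins_ins: "x \<in> states n \<Longrightarrow> ins k (ins k' x) = ins k x"
    and ins_ex: "x \<in> states n \<Longrightarrow> ins (ex x) x = x"
begin

lemma sum_reindex:
  assumes x: "x \<in> states n" and F: "\<And>z. z \<in> states n \<Longrightarrow> F z \<noteq> 0 \<Longrightarrow> ins (ex z) x = z"
  shows "(\<Sum>z\<in>states n. F z) = (\<Sum>k\<in>UNIV. F (ins k x))"
proof -
  have "(\<Sum>z\<in>states n. F z) = (\<Sum>z\<in>range (\<lambda>k. ins k x). F z)"
  proof (rule sum.mono_neutral_right)
    show "range (\<lambda>k. ins k x) \<subseteq> states n" using ins_st[OF x] by blast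
    show "\<forall>z\<in>states n - range (\<lambda>k. ins k x). F z = 0" using F by (metis DiffD1 DiffD2 rangeI)
  qed simp
  also have "\<dots> = (\<Sum>k\<in>UNIV. F (ins k x))"
  proof (rule sum.reindex[unfolded comp_def])
    show "inj (\<lambda>k. ins k x)" by (rule injI) (metis ex_ins x)
  qed
  finally show ?thesis .
qed

lemma Wop_mult: "opmul n (Wop n ex ins M) (Wop n ex ins M') = Wop n ex ins (mm M M')"
proof (rule ext, rule ext)
  fix x y
  show "opmul n (Wop n ex ins M) (Wop n ex ins M') x y = Wop n ex ins (mm M M') x y"
  proof (cases "x \<in> states n")
    case False then show ?thesis by (simp add: opmul_def Wop_def)
  next
    case x: True
    have "opmul n (Wop n ex ins M) (Wop n ex ins M') x y
       = (\<Sum>k\<in>UNIV. Wop n ex ins M x (ins k x) * Wop n ex ins M' (ins k x) y)"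
      unfolding opmul_def by (rule sum_reindex[OF x]) (simp add: Wop_def split: if_split_asm)
    also have "\<dots> = (\<Sum>k\<in>UNIV. if y \<in> states n \<and> ins (ex y) x = y then M (ex x) k * M' k (ex y) else 0)"
      by (rule sum.cong) (auto simp: Wop_def x ins_st ex_ins ins_ins)
    also have "\<dots> = Wop n ex ins (mm M M') x y"
      by (cases "y \<in> states n"; cases "ins (ex y) x = y") (simp_all add: Wop_def mm_def x)
    finally show ?thesis .
  qed
qed

lemma Wop_mid: "Wop n ex ins mid = opid n"
proof (rule ext, rule ext)
  fix x y
  have "x \<in> states n \<Longrightarrow> ins (ex y) x = y \<Longrightarrow> ex x = ex y \<Longrightarrow> x = y" by (metis ins_ex)
  then show "Wop n ex ins mid x y = opid n x y" by (auto simp: Wop_def opid_def mid_def ins_ex)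
qed

lemma Wop_prod: "opprod n (map (Wop n ex ins) Ms) = Wop n ex ins (foldr mm Ms mid)"
  by (induct Ms) (simp_all add: Wop_mid Wop_mult)

lemma Wop_at: "x \<in> states n \<Longrightarrow> Wop n ex ins M (ins k x) (ins k' x) = M k k'"
  by (simp add: Wop_def ins_st ex_ins ins_ins)

lemma Wop_inj: assumes "Wop n ex ins M = Wop n ex ins M'" shows "M = M'"
proof (rule ext, rule ext)
  fix k k'
  have x: "(undefined, replicate n undefined) \<in> states n" by (simp add: states_def)
  show "M k k' = M' k k'" using Wop_at[OF x, of M k k'] Wop_at[OF x, of M' k k'] assms by simp
qed

end

locale win2 = w1: win n ex1 ins1 + w2: win n ex2 ins2
  for n and ex1 :: "('w::finite,'v::finite) st \<Rightarrow> 'k::finite" and ins1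
    and ex2 :: "('w::finite,'v::finite) st \<Rightarrow> 'l::finite" and ins2 +
  assumes comm: "x \<in> states n \<Longrightarrow> ins1 k (ins2 k' x) = ins2 k' (ins1 k x)"
    and ex1_ins2: "y \<in> states n \<Longrightarrow> ex1 (ins2 l y) = ex1 y"
    and ex2_ins1: "z \<in> states n \<Longrightarrow> ex2 (ins1 m z) = ex2 z"
begin

lemma prod12: "opmul n (Wop n ex1 ins1 M) (Wop n ex2 ins2 N) = (\<lambda>x y.
   if x \<in> states n \<and> y \<in> states n \<and> ins1 (ex1 y) (ins2 (ex2 y) x) = y then M (ex1 x) (ex1 y) * N (ex2 x) (ex2 y) else 0)"
proof (rule ext, rule ext)
  fix x y
  show "opmul n (Wop n ex1 ins1 M) (Wop n ex2 ins2 N) x y = (if x \<in> states n \<and> y \<in> states n \<and> ins1 (ex1 y) (ins2 (ex2 y) x) = y then M (ex1 x) (ex1 y) * N (ex2 x) (ex2 y) else 0)"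
  proof (cases "x \<in> states n")
    case False then show ?thesis by (simp add: opmul_def Wop_def)
  next
    case x: True
    have "opmul n (Wop n ex1 ins1 M) (Wop n ex2 ins2 N) x y
       = (\<Sum>k\<in>UNIV. Wop n ex1 ins1 M x (ins1 k x) * Wop n ex2 ins2 N (ins1 k x) y)"
      unfolding opmul_def by (rule w1.sum_reindex[OF x]) (simp add: Wop_def split: if_split_asm)
    also have "\<dots> = (\<Sum>k\<in>UNIV. if k = ex1 y then (if y \<in> states n \<and> ins1 (ex1 y) (ins2 (ex2 y) x) = y then M (ex1 x) (ex1 y) * N (ex2 x) (ex2 y) else 0) else 0)"
    proof (rule sum.cong)
      fix k
      have A: "Wop n ex1 ins1 M x (ins1 k x) = M (ex1 x) k"
        by (simp add: Wop_def x w1.ins_st w1.ex_ins w1.ins_ins)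
      have B: "ins2 (ex2 y) (ins1 k x) = y \<Longrightarrow> k = ex1 y"
        by (metis ex1_ins2 w1.ex_ins w1.ins_st x)
      show "Wop n ex1 ins1 M x (ins1 k x) * Wop n ex2 ins2 N (ins1 k x) y = (if k = ex1 y then (if y \<in> states n \<and> ins1 (ex1 y) (ins2 (ex2 y) x) = y then M (ex1 x) (ex1 y) * N (ex2 x) (ex2 y) else 0) else 0)"
      proof (cases "k = ex1 y")
        case True
        have C: "ins2 (ex2 y) (ins1 (ex1 y) x) = ins1 (ex1 y) (ins2 (ex2 y) x)" using comm[OF x] by simp
        show ?thesis unfolding A True Wop_def C
          by (simp add: x w1.ins_st ex2_ins1 w1.ex_ins)
      next
        case False
        then have "Wop n ex2 ins2 N (ins1 k x) y = 0" using B unfolding Wop_def by auto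
        then show ?thesis using False by simp
      qed
    qed simp
    also have "\<dots> = (if y \<in> states n \<and> ins1 (ex1 y) (ins2 (ex2 y) x) = y then M (ex1 x) (ex1 y) * N (ex2 x) (ex2 y) else 0)"
      by simp
    finally show ?thesis using x by simp
  qed
qed

end

lemma win2_swap: "win2 n ex1 ins1 ex2 ins2 \<Longrightarrow> win2 n ex2 ins2 ex1 ins1"
  unfolding win2_def win2_axioms_def by auto

lemma win2_commute: assumes "win2 n ex1 ins1 ex2 ins2"
  shows "opmul n (Wop n ex1 ins1 M) (Wop n ex2 ins2 N) = opmul n (Wop n ex2 ins2 N) (Wop n ex1 ins1 M)"
proof -
  interpret a: win2 n ex1 ins1 ex2 ins2 by fact
  interpret b: win2 n ex2 ins2 ex1 ins1 by (rule win2_swap) fact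
  show ?thesis unfolding a.prod12 b.prod12
  proof (rule ext, rule ext)
    fix x y
    show "(if x \<in> states n \<and> y \<in> states n \<and> ins1 (ex1 y) (ins2 (ex2 y) x) = y then M (ex1 x) (ex1 y) * N (ex2 x) (ex2 y) else 0) =
          (if x \<in> states n \<and> y \<in> states n \<and> ins2 (ex2 y) (ins1 (ex1 y) x) = y then N (ex2 x) (ex2 y) * M (ex1 x) (ex1 y) else 0)"
      by (cases "x \<in> states n") (simp_all add: a.comm mult.commute)
  qed
qed

lemma mem_states: "x \<in> states n \<longleftrightarrow> length (snd x) = n"
  by (cases x) (simp add: states_def)

definition ex2 :: "nat \<Rightarrow> ('w,'v) st \<Rightarrow> 'v \<times> 'v" where "ex2 p x = (snd x ! p, snd x ! Suc p)"
definition ins2 :: "nat \<Rightarrow> 'v \<times> 'v \<Rightarrow> ('w,'v) st \<Rightarrow> ('w,'v) st" where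
  "ins2 p k x = (fst x, (snd x)[p := fst k, Suc p := snd k])"
definition exP :: "('w,'v) st \<Rightarrow> 'w \<times> 'v" where "exP x = (fst x, snd x ! 0)"
definition insP :: "'w \<times> 'v \<Rightarrow> ('w,'v) st \<Rightarrow> ('w,'v) st" where
  "insP k x = (fst k, (snd x)[0 := snd k])"
definition ex3 :: "nat \<Rightarrow> ('w,'v) st \<Rightarrow> 'v \<times> 'v \<times> 'v" where
  "ex3 p x = (snd x ! p, snd x ! Suc p, snd x ! Suc (Suc p))"
definition ins3 :: "nat \<Rightarrow> 'v \<times> 'v \<times> 'v \<Rightarrow> ('w,'v) st \<Rightarrow> ('w,'v) st" where
  "ins3 p k x = (fst x, (snd x)[p := fst k, Suc p := fst (snd k), Suc (Suc p) := snd (snd k)])"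
definition exE :: "('w,'v) st \<Rightarrow> 'w \<times> 'v \<times> 'v" where "exE x = (fst x, snd x ! 0, snd x ! 1)"
definition insE :: "'w \<times> 'v \<times> 'v \<Rightarrow> ('w,'v) st \<Rightarrow> ('w,'v) st" where
  "insE k x = (fst k, (snd x)[0 := fst (snd k), 1 := snd (snd k)])"

lemma win_W2: "Suc p < n \<Longrightarrow> win n (ex2 p :: ('w::finite,'v::finite) st \<Rightarrow> _) (ins2 p)"
  by unfold_locales (auto simp: ex2_def ins2_def mem_states list_eq_iff_nth_eq nth_list_update)

lemma win_WP: "1 \<le> n \<Longrightarrow> win n (exP :: ('w::finite,'v::finite) st \<Rightarrow> _) insP"
  by unfold_locales (auto simp: exP_def insP_def mem_states list_eq_iff_nth_eq nth_list_update)

lemma win_W3: "Suc (Suc p) < n \<Longrightarrow> win n (ex3 p :: ('w::finite,'v::finite) st \<Rightarrow> _) (ins3 p)"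
  by unfold_locales (auto simp: ex3_def ins3_def mem_states list_eq_iff_nth_eq nth_list_update)

lemma win_WE: "2 \<le> n \<Longrightarrow> win n (exE :: ('w::finite,'v::finite) st \<Rightarrow> _) insE"
  by unfold_locales (auto simp: exE_def insE_def mem_states list_eq_iff_nth_eq nth_list_update)

lemma win2_W2W2: "Suc p < q \<Longrightarrow> Suc q < n \<Longrightarrow> win2 n (ex2 p :: ('w::finite,'v::finite) st \<Rightarrow> _) (ins2 p) (ex2 q) (ins2 q)"
  unfolding win2_def win2_axioms_def using win_W2[of p n] win_W2[of q n]
  by (auto simp: ex2_def ins2_def mem_states list_eq_iff_nth_eq nth_list_update)

lemma win2_WPW2: "1 \<le> q \<Longrightarrow> Suc q < n \<Longrightarrow> win2 n (exP :: ('w::finite,'v::finite) st \<Rightarrow> _) insP (ex2 q) (ins2 q)"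
  unfolding win2_def win2_axioms_def using win_WP[of n] win_W2[of q n]
  by (auto simp: exP_def insP_def ex2_def ins2_def mem_states list_eq_iff_nth_eq nth_list_update)

lemma upd2_iff: "length xs = n \<Longrightarrow> length ys = n \<Longrightarrow> Suc p < n \<Longrightarrow>
   (xs[p := ys ! p, Suc p := ys ! Suc p] = ys) \<longleftrightarrow> (\<forall>j<n. j \<noteq> p \<and> j \<noteq> Suc p \<longrightarrow> xs ! j = ys ! j)"
  by (auto simp: list_eq_iff_nth_eq nth_list_update)

lemma Rop_W2: "Suc p < n \<Longrightarrow> (Rop R n (Suc p) :: ('w::finite,'v::finite) lop) = Wop n (ex2 p) (ins2 p) R"
proof (rule ext, rule ext)
  fix x y :: "('w,'v) st" assume p: "Suc p < n"
  obtain a xs b ys where x: "x = (a,xs)" and y: "y = (b,ys)" by (cases x, cases y) auto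
  show "Rop R n (Suc p) x y = Wop n (ex2 p) (ins2 p) R x y"
    unfolding x y Rop_def Wop_def ex2_def ins2_def using upd2_iff[OF _ _ p, of xs ys]
    by (auto simp: states_def)
qed

lemma Piop_WP: "1 \<le> n \<Longrightarrow> (Piop n A :: ('w::finite,'v::finite) lop) = Wop n exP insP A"
proof (rule ext, rule ext)
  fix x y :: "('w,'v) st" assume n: "1 \<le> n"
  obtain a xs b ys where x: "x = (a,xs)" and y: "y = (b,ys)" by (cases x, cases y) auto
  show "Piop n A x y = Wop n exP insP A x y"
  proof (cases "length xs = n \<and> length ys = n")
    case True
    then obtain u us v vs where "xs = u # us" "ys = v # vs" using n
      by (cases xs; cases ys) auto
    then show ?thesis unfolding x y Piop_def Wop_def exP_def insP_def by (auto simp: states_def)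
  next
    case False then show ?thesis unfolding x y Piop_def Wop_def by (auto simp: states_def)
  qed
qed

lemma Rop_W3a: "Suc (Suc p) < n \<Longrightarrow> (Rop R n (Suc p) :: ('w::finite,'v::finite) lop) = Wop n (ex3 p) (ins3 p) (R12 R)"
proof (rule ext, rule ext)
  fix x y :: "('w,'v) st" assume p: "Suc (Suc p) < n"
  obtain a xs b ys where x: "x = (a,xs)" and y: "y = (b,ys)" by (cases x, cases y) auto
  have e: "length xs = n \<Longrightarrow> length ys = n \<Longrightarrow> (xs[p := ys ! p, Suc p := ys ! Suc p, Suc (Suc p) := ys ! Suc (Suc p)] = ys \<and> xs ! Suc (Suc p) = ys ! Suc (Suc p))
      \<longleftrightarrow> (\<forall>j<n. j \<noteq> p \<and> j \<noteq> Suc p \<longrightarrow> xs ! j = ys ! j)"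
    using p by (auto simp: list_eq_iff_nth_eq nth_list_update)
  show "Rop R n (Suc p) x y = Wop n (ex3 p) (ins3 p) (R12 R) x y"
    unfolding x y Rop_def Wop_def ex3_def ins3_def R12_def using e
    by (auto simp: states_def)
qed

lemma Rop_W3b: "Suc (Suc p) < n \<Longrightarrow> (Rop R n (Suc (Suc p)) :: ('w::finite,'v::finite) lop) = Wop n (ex3 p) (ins3 p) (R23 R)"
proof (rule ext, rule ext)
  fix x y :: "('w,'v) st" assume p: "Suc (Suc p) < n"
  obtain a xs b ys where x: "x = (a,xs)" and y: "y = (b,ys)" by (cases x, cases y) auto
  have e: "length xs = n \<Longrightarrow> length ys = n \<Longrightarrow> (xs[p := ys ! p, Suc p := ys ! Suc p, Suc (Suc p) := ys ! Suc (Suc p)] = ys \<and> xs ! p = ys ! p)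
      \<longleftrightarrow> (\<forall>j<n. j \<noteq> Suc p \<and> j \<noteq> Suc (Suc p) \<longrightarrow> xs ! j = ys ! j)"
    using p by (auto simp: list_eq_iff_nth_eq nth_list_update)
  show "Rop R n (Suc (Suc p)) x y = Wop n (ex3 p) (ins3 p) (R23 R) x y"
    unfolding x y Rop_def Wop_def ex3_def ins3_def R23_def using e
    by (auto simp: states_def)
qed

definition MR :: "('v \<times> 'v \<Rightarrow> 'v \<times> 'v \<Rightarrow> complex) \<Rightarrow> 'w \<times> 'v \<times> 'v \<Rightarrow> 'w \<times> 'v \<times> 'v \<Rightarrow> complex" where
  "MR R k k' = (if fst k = fst k' then R (snd k) (snd k') else 0)"
definition MP :: "('w \<times> 'v \<Rightarrow> 'w \<times> 'v \<Rightarrow> complex) \<Rightarrow> 'w \<times> 'v \<times> 'v \<Rightarrow> 'w \<times> 'v \<times> 'v \<Rightarrow> complex" where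
  "MP A k k' = (if snd (snd k) = snd (snd k') then A (fst k, fst (snd k)) (fst k', fst (snd k')) else 0)"

lemma Rop_WE: "2 \<le> n \<Longrightarrow> (Rop R n 1 :: ('w::finite,'v::finite) lop) = Wop n exE insE (MR R)"
proof (rule ext, rule ext)
  fix x y :: "('w,'v) st" assume p: "2 \<le> n"
  obtain a xs b ys where x: "x = (a,xs)" and y: "y = (b,ys)" by (cases x, cases y) auto
  have e: "length xs = n \<Longrightarrow> length ys = n \<Longrightarrow> (xs[0 := ys ! 0, 1 := ys ! 1] = ys)
      \<longleftrightarrow> (\<forall>j<n. j \<noteq> 0 \<and> j \<noteq> 1 \<longrightarrow> xs ! j = ys ! j)"
    using p by (auto simp: list_eq_iff_nth_eq nth_list_update)
  show "Rop R n 1 x y = Wop n exE insE (MR R) x y"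
    unfolding x y Rop_def Wop_def exE_def insE_def MR_def using e
    by (auto simp: states_def)
qed

lemma Piop_WE: "2 \<le> n \<Longrightarrow> (Piop n A :: ('w::finite,'v::finite) lop) = Wop n exE insE (MP A)"
proof (rule ext, rule ext)
  fix x y :: "('w,'v) st" assume n: "2 \<le> n"
  obtain a xs b ys where x: "x = (a,xs)" and y: "y = (b,ys)" by (cases x, cases y) auto
  show "Piop n A x y = Wop n exE insE (MP A) x y"
  proof (cases "length xs = n \<and> length ys = n")
    case True
    then obtain u us v vs where xs: "xs = u # us" and ys: "ys = v # vs" using n
      by (cases xs; cases ys) auto
    obtain u' us' v' vs' where "us = u' # us'" "vs = v' # vs'" using n True unfolding xs ys
      by (cases us; cases vs) auto
    then show ?thesis unfolding x y xs ys Piop_def Wop_def exE_def insE_def MP_def by (auto simp: states_def)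
  next
    case False then show ?thesis unfolding x y Piop_def Wop_def by (auto simp: states_def)
  qed
qed

lemma opprod_map_Wop: "win n ex ins \<Longrightarrow> opprod n (map (Wop n ex ins) Ms) = Wop n ex ins (foldr mm Ms mid)"
  by (rule win.Wop_prod)

lemma C_sq: assumes "mm R R = mid" "1 \<le> i" "i < n"
  shows "opprod n [Rop R n i, Rop R n i] = (opid n :: ('w::finite,'v::finite) lop)"
proof -
  obtain p where i: "i = Suc p" using assms by (cases i) auto
  have w: "win n (ex2 p :: ('w,'v) st \<Rightarrow> _) (ins2 p)" using assms i by (intro win_W2) auto
  have l: "[Rop R n i, Rop R n i] = (map (Wop n (ex2 p) (ins2 p)) [R, R] :: ('w,'v) lop list)"
    using assms i by (simp add: Rop_W2)
  show ?thesis unfolding l opprod_map_Wop[OF w] using assms win.Wop_mid[OF w] by simp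
qed

lemma C_braid: assumes "YBE R" "1 \<le> i" "Suc i < n"
  shows "opprod n [Rop R n i, Rop R n (Suc i), Rop R n i] = (opprod n [Rop R n (Suc i), Rop R n i, Rop R n (Suc i)] :: ('w::finite,'v::finite) lop)"
proof -
  obtain p where i: "i = Suc p" using assms by (cases i) auto
  have w: "win n (ex3 p :: ('w,'v) st \<Rightarrow> _) (ins3 p)" using assms i by (intro win_W3) auto
  have l1: "[Rop R n i, Rop R n (Suc i), Rop R n i] = (map (Wop n (ex3 p) (ins3 p)) [R12 R, R23 R, R12 R] :: ('w,'v) lop list)"
    using assms i by (simp add: Rop_W3a Rop_W3b)
  have l2: "[Rop R n (Suc i), Rop R n i, Rop R n (Suc i)] = (map (Wop n (ex3 p) (ins3 p)) [R23 R, R12 R, R23 R] :: ('w,'v) lop list)"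
    using assms i by (simp add: Rop_W3a Rop_W3b)
  show ?thesis unfolding l1 l2 opprod_map_Wop[OF w] using assms(1) unfolding YBE_def by simp
qed

lemma C_comm: assumes "1 \<le> i" "i + 2 \<le> j" "j < n"
  shows "opprod n [Rop R n i, Rop R n j] = (opprod n [Rop R n j, Rop R n i] :: ('w::finite,'v::finite) lop)"
proof -
  obtain p where i: "i = Suc p" using assms by (cases i) auto
  obtain q where j: "j = Suc q" using assms by (cases j) auto
  have w: "win2 n (ex2 p :: ('w,'v) st \<Rightarrow> _) (ins2 p) (ex2 q) (ins2 q)" using assms i j by (intro win2_W2W2) auto
  have a: "Rop R n i = (Wop n (ex2 p) (ins2 p) R :: ('w,'v) lop)" using assms i by (simp add: Rop_W2)
  have b: "Rop R n j = (Wop n (ex2 q) (ins2 q) R :: ('w,'v) lop)" using assms j by (simp add: Rop_W2)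
  show ?thesis unfolding a b using win2_commute[OF w] by (simp add: opid_right)
qed

lemma C_PR: assumes "2 \<le> j" "j < n"
  shows "opprod n [Piop n A, Rop R n j] = (opprod n [Rop R n j, Piop n A] :: ('w::finite,'v::finite) lop)"
proof -
  obtain q where j: "j = Suc q" using assms by (cases j) auto
  have w: "win2 n (exP :: ('w,'v) st \<Rightarrow> _) insP (ex2 q) (ins2 q)" using assms j by (intro win2_WPW2) auto
  have a: "Piop n A = (Wop n exP insP A :: ('w,'v) lop)" using assms by (simp add: Piop_WP)
  have b: "Rop R n j = (Wop n (ex2 q) (ins2 q) R :: ('w,'v) lop)" using assms j by (simp add: Rop_W2)
  show ?thesis unfolding a b using win2_commute[OF w] by (simp add: opid_right)
qed

lemma C_PP: assumes "1 \<le> n"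
  shows "opprod n [Piop n A, Piop n B] = (opprod n [Piop n (mm A B)] :: ('w::finite,'v::finite) lop)"
proof -
  have w: "win n (exP :: ('w,'v) st \<Rightarrow> _) insP" using assms by (intro win_WP)
  have l1: "[Piop n A, Piop n B] = (map (Wop n exP insP) [A, B] :: ('w,'v) lop list)" using assms by (simp add: Piop_WP)
  have l2: "[Piop n (mm A B)] = (map (Wop n exP insP) [mm A B] :: ('w,'v) lop list)" using assms by (simp add: Piop_WP)
  show ?thesis unfolding l1 l2 opprod_map_Wop[OF w] by simp
qed

lemma C_P1: assumes "1 \<le> n"
  shows "opprod n [Piop n mid] = (opprod n [] :: ('w::finite,'v::finite) lop)"
proof -
  have w: "win n (exP :: ('w,'v) st \<Rightarrow> _) insP" using assms by (intro win_WP)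
  have l1: "[Piop n mid] = (map (Wop n exP insP) [mid] :: ('w,'v) lop list)" using assms by (simp add: Piop_WP)
  show ?thesis unfolding l1 opprod_map_Wop[OF w] using win.Wop_mid[OF w] by simp
qed

lemma C_ext_gen: assumes "2 \<le> n"
  and "(opprod 2 [Rop R 2 1, Piop 2 A, Rop R 2 1, Piop 2 B] :: ('w::finite,'v::finite) lop) = opprod 2 [Piop 2 B, Rop R 2 1, Piop 2 A, Rop R 2 1]"
  shows "(opprod n [Rop R n 1, Piop n A, Rop R n 1, Piop n B] :: ('w::finite,'v::finite) lop) = opprod n [Piop n B, Rop R n 1, Piop n A, Rop R n 1]"
proof -
  have w2: "win 2 (exE :: ('w,'v) st \<Rightarrow> _) insE" by (intro win_WE) simp
  have wn: "win n (exE :: ('w,'v) st \<Rightarrow> _) insE" using assms by (intro win_WE)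
  have l: "\<And>m. 2 \<le> m \<Longrightarrow> [Rop R m 1, Piop m A, Rop R m 1, Piop m B] = (map (Wop m exE insE) [MR R, MP A, MR R, MP B] :: ('w,'v) lop list)"
    by (simp only: Rop_WE Piop_WE list.map)
  have r: "\<And>m. 2 \<le> m \<Longrightarrow> [Piop m B, Rop R m 1, Piop m A, Rop R m 1] = (map (Wop m exE insE) [MP B, MR R, MP A, MR R] :: ('w,'v) lop list)"
    by (simp only: Rop_WE Piop_WE list.map)
  have "Wop 2 (exE :: ('w,'v) st \<Rightarrow> _) insE (foldr mm [MR R, MP A, MR R, MP B] mid) = Wop 2 exE insE (foldr mm [MP B, MR R, MP A, MR R] mid)"
    using assms(2) unfolding l[OF order_refl] r[OF order_refl] opprod_map_Wop[OF w2] .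
  then have e: "foldr mm [MR R, MP A, MR R, MP B] mid = foldr mm [MP B, MR R, MP A, MR R] mid"
    by (rule win.Wop_inj[OF w2])
  show ?thesis unfolding l[OF assms(1)] r[OF assms(1)] opprod_map_Wop[OF wn] e ..
qed

declare upt_Suc[simp del]

lemma sword_Nil[simp]: "sword [] = id" by (simp add: sword_def)
lemma sword_Cons[simp]: "sword (i # w) = transpose i (Suc i) \<circ> sword w" by (simp add: sword_def)
lemma sword_append: "sword (u @ v) = sword u \<circ> sword v"
  by (induct u) (simp_all add: comp_assoc)

lemma sword_rev_inv: "sword (rev w) \<circ> sword w = id"
proof (induct w)
  case (Cons i w)
  then show ?case by (simp add: sword_append fun_eq_iff)
qed simp

lemma sword_inv_rev: "sword w \<circ> sword (rev w) = id"
  using sword_rev_inv[of "rev w"] by simp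

lemma sword_rev_apply: "sword (rev w) (sword w x) = x"
  using fun_cong[OF sword_rev_inv[of w], of x] by simp

lemma sword_permutes: "set w \<subseteq> {1..<n} \<Longrightarrow> sword w permutes {1..n}"
proof (induct w)
  case (Cons i w)
  then have "transpose i (Suc i) permutes {1..n}" by (intro permutes_swap_id) auto
  moreover have "sword w permutes {1..n}" using Cons by simp
  ultimately show ?case unfolding sword_Cons by (rule permutes_compose[rotated])
qed simp

inductive weq :: "nat \<Rightarrow> nat list \<Rightarrow> nat list \<Rightarrow> bool" for n where
  w_refl: "weq n w w"
| w_sym: "weq n u v \<Longrightarrow> weq n v u"
| w_trans: "weq n u v \<Longrightarrow> weq n v w \<Longrightarrow> weq n u w"
| w_ctx: "weq n u v \<Longrightarrow> weq n (a @ u @ c) (a @ v @ c)"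
| w_sq: "1 \<le> i \<Longrightarrow> i < n \<Longrightarrow> weq n [i, i] []"
| w_braid: "1 \<le> i \<Longrightarrow> Suc i < n \<Longrightarrow> weq n [i, Suc i, i] [Suc i, i, Suc i]"
| w_comm: "1 \<le> i \<Longrightarrow> i + 2 \<le> j \<Longrightarrow> j < n \<Longrightarrow> weq n [i, j] [j, i]"

lemma weq_sword: "weq n u v \<Longrightarrow> sword u = sword v"
proof (induct rule: weq.induct)
  case (w_ctx u v a c) then show ?case by (simp add: sword_append)
next
  case (w_braid i) then show ?case by (simp add: fun_eq_iff transpose_def)
next
  case (w_comm i j) then show ?case by (simp add: fun_eq_iff transpose_def)
qed simp_all

lemma weq_rev: "weq n u v \<Longrightarrow> weq n (rev u) (rev v)"
proof (induct rule: weq.induct)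
  case (w_refl w) show ?case by (rule weq.w_refl)
next
  case (w_sym u v) then show ?case by (simp add: weq.w_sym)
next
  case (w_trans u v w) then show ?case by (meson weq.w_trans)
next
  case (w_ctx u v a c) then show ?case using weq.w_ctx[of n "rev u" "rev v" "rev c" "rev a"] by simp
next
  case (w_sq i) then show ?case using weq.w_sq[of i n] by simp
next
  case (w_braid i) then show ?case using weq.w_braid[of i n] by simp
next
  case (w_comm i j) then show ?case using weq.w_comm[of i j n] by (simp add: weq.w_sym)
qed

lemma weq_mono: "weq m u v \<Longrightarrow> m \<le> n \<Longrightarrow> weq n u v"
proof (induct rule: weq.induct)
  case (w_refl w) show ?case by (rule weq.w_refl)
next
  case (w_sym u v) then show ?case by (simp add: weq.w_sym)
next
  case (w_trans u v w) then show ?case by (meson weq.w_trans)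
next
  case (w_ctx u v a c) then show ?case by (simp add: weq.w_ctx)
next
  case (w_sq i) then show ?case using weq.w_sq[of i n] by simp
next
  case (w_braid i) then show ?case using weq.w_braid[of i n] by simp
next
  case (w_comm i j) then show ?case using weq.w_comm[of i j n] by simp
qed

lemma weq_app: "weq n u u' \<Longrightarrow> weq n v v' \<Longrightarrow> weq n (u @ v) (u' @ v')"
proof -
  assume a: "weq n u u'" and b: "weq n v v'"
  have 1: "weq n (u @ v) (u' @ v)" using w_ctx[OF a, of "[]" v] by simp
  have 2: "weq n (u' @ v) (u' @ v')" using w_ctx[OF b, of u' "[]"] by simp
  show ?thesis by (rule w_trans[OF 1 2])
qed

lemma weq_Cons: "weq n u v \<Longrightarrow> weq n (i # u) (i # v)"
  using weq_app[OF w_refl[of n "[i]"]] by simp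

lemma weq_push: "1 \<le> i \<Longrightarrow> i < n \<Longrightarrow> \<forall>j\<in>set w. 1 \<le> j \<and> j < n \<and> (i + 2 \<le> j \<or> j + 2 \<le> i) \<Longrightarrow> weq n (i # w) (w @ [i])"
proof (induct w)
  case Nil then show ?case by (simp add: w_refl)
next
  case (Cons j w)
  have "weq n [i, j] [j, i]"
  proof (cases "i + 2 \<le> j")
    case True then show ?thesis using Cons.prems by (intro w_comm) auto
  next
    case False
    then have "weq n [j, i] [i, j]" using Cons.prems by (intro w_comm) auto
    then show ?thesis by (rule w_sym)
  qed
  then have "weq n (i # j # w) (j # i # w)" using w_ctx[of n "[i,j]" "[j,i]" "[]" w] by simp
  moreover have "weq n (j # i # w) (j # w @ [i])" using Cons.hyps Cons.prems by (intro weq_Cons) simp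
  ultimately have "weq n (i # j # w) (j # w @ [i])" by (rule w_trans)
  then show ?case by simp
qed

fun can :: "nat \<Rightarrow> (nat \<Rightarrow> nat) \<Rightarrow> nat list" where
  "can 0 \<sigma> = []"
| "can (Suc m) \<sigma> = [\<sigma> (Suc m)..<Suc m] @ can m (sword (rev [\<sigma> (Suc m)..<Suc m]) \<circ> \<sigma>)"

lemma sword_upt_last: "k \<le> m \<Longrightarrow> sword [k..<m] m = k"
proof (induction "m - k" arbitrary: k)
  case 0 then show ?case by simp
next
  case (Suc d)
  then have "k < m" by simp
  then have "[k..<m] = k # [Suc k..<m]" by (simp add: upt_conv_Cons)
  moreover have "sword [Suc k..<m] m = Suc k" using Suc by simp
  ultimately show ?case by simp
qed

lemma can_id: "can n id = []"
  by (induct n) simp_all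

lemma permutes_shrink: "\<sigma> permutes {1..Suc m} \<Longrightarrow> \<sigma> (Suc m) = Suc m \<Longrightarrow> \<sigma> permutes {1..m}"
  using permutes_insert_lemma[of \<sigma> "Suc m" "{1..m}"]
  by (simp add: atLeastAtMostSuc_conv)

lemma can_step_facts:
  assumes "\<sigma> permutes {1..Suc m}"
  defines "k \<equiv> \<sigma> (Suc m)"
  shows "1 \<le> k" "k \<le> Suc m" "sword (rev [k..<Suc m]) \<circ> \<sigma> permutes {1..m}"
proof -
  have "k \<in> {1..Suc m}" unfolding k_def using permutes_in_image[OF assms(1), of "Suc m"] by simp
  then show k: "1 \<le> k" "k \<le> Suc m" by auto
  have "set (rev [k..<Suc m]) \<subseteq> {1..<Suc m}" using k by auto
  then have "sword (rev [k..<Suc m]) permutes {1..Suc m}" by (rule sword_permutes)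
  then have "sword (rev [k..<Suc m]) \<circ> \<sigma> permutes {1..Suc m}"
    using assms(1) by (rule permutes_compose[rotated])
  moreover have "(sword (rev [k..<Suc m]) \<circ> \<sigma>) (Suc m) = Suc m"
  proof -
    have "sword (rev [k..<Suc m]) (sword [k..<Suc m] (Suc m)) = Suc m" by (rule sword_rev_apply)
    then show ?thesis using sword_upt_last[OF k(2)] by (simp add: k_def)
  qed
  ultimately show "sword (rev [k..<Suc m]) \<circ> \<sigma> permutes {1..m}" by (rule permutes_shrink)
qed

lemma can_props: "\<sigma> permutes {1..n} \<Longrightarrow> set (can n \<sigma>) \<subseteq> {1..<n} \<and> sword (can n \<sigma>) = \<sigma>"
proof (induct n arbitrary: \<sigma>)
  case 0 then show ?case by (simp add: permutes_empty)
next
  case (Suc m)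
  define k where "k = \<sigma> (Suc m)"
  note f = can_step_facts[OF Suc.prems, folded k_def]
  have IH: "set (can m (sword (rev [k..<Suc m]) \<circ> \<sigma>)) \<subseteq> {1..<m} \<and> sword (can m (sword (rev [k..<Suc m]) \<circ> \<sigma>)) = sword (rev [k..<Suc m]) \<circ> \<sigma>"
    using Suc.hyps f(3) by blast
  have c: "can (Suc m) \<sigma> = [k..<Suc m] @ can m (sword (rev [k..<Suc m]) \<circ> \<sigma>)" by (simp add: k_def)
  have "sword (can (Suc m) \<sigma>) = sword [k..<Suc m] \<circ> (sword (rev [k..<Suc m]) \<circ> \<sigma>)"
    using IH unfolding c by (simp add: sword_append)
  also have "\<dots> = \<sigma>" by (simp add: comp_assoc[symmetric] sword_inv_rev)
  finally have "sword (can (Suc m) \<sigma>) = \<sigma>" .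
  moreover have "set (can (Suc m) \<sigma>) \<subseteq> {1..<Suc m}" unfolding c using IH f(1) by auto
  ultimately show ?case by blast
qed

lemma sword_single: "sword [i] = transpose i (Suc i)" by simp

lemma weq_can_step:
  "\<sigma> permutes {1..n} \<Longrightarrow> 1 \<le> i \<Longrightarrow> i < n \<Longrightarrow> weq n (i # can n \<sigma>) (can n (transpose i (Suc i) \<circ> \<sigma>))"
proof (induct n arbitrary: \<sigma> i)
  case 0 then show ?case by simp
next
  case (Suc m)
  define k where "k = \<sigma> (Suc m)"
  define c where "c = [k..<Suc m]"
  define \<tau> where "\<tau> = sword (rev c) \<circ> \<sigma>"
  note f = can_step_facts[OF Suc.prems(1), folded k_def, folded c_def, folded \<tau>_def]
  have cs: "can (Suc m) \<sigma> = c @ can m \<tau>" by (simp add: k_def c_def \<tau>_def)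
  let ?t = "transpose i (Suc i)"
  have cs': "can (Suc m) (?t \<circ> \<sigma>) = [?t k..<Suc m] @ can m (sword (rev [?t k..<Suc m]) \<circ> ?t \<circ> \<sigma>)"
    by (simp add: k_def comp_assoc)
  consider "k = Suc i" | "k = i" | "Suc i < k" | "k < i" by linarith
  then show ?case
  proof cases
    case 1
    then have tk: "?t k = i" by simp
    have ci: "[i..<Suc m] = i # c" using 1 Suc.prems f unfolding c_def by (simp add: upt_conv_Cons)
    have "sword (rev [i..<Suc m]) \<circ> ?t \<circ> \<sigma> = \<tau>" unfolding ci \<tau>_def by (simp add: sword_append fun_eq_iff)
    then have e: "can (Suc m) (?t \<circ> \<sigma>) = i # can (Suc m) \<sigma>" unfolding cs' tk cs ci by simp
    show ?thesis unfolding e by (rule w_refl)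
  next
    case 2
    then have tk: "?t k = Suc i" by simp
    define c' where "c' = [Suc i..<Suc m]"
    have ci: "c = i # c'" using 2 Suc.prems unfolding c_def c'_def by (simp add: upt_conv_Cons)
    have "sword (rev c') \<circ> ?t \<circ> \<sigma> = \<tau>" unfolding \<tau>_def ci by (simp add: sword_append fun_eq_iff)
    then have e: "can (Suc m) (?t \<circ> \<sigma>) = c' @ can m \<tau>" unfolding cs' tk c'_def[symmetric] by simp
    have "weq (Suc m) ([] @ [i,i] @ (c' @ can m \<tau>)) ([] @ [] @ (c' @ can m \<tau>))"
      using Suc.prems by (intro w_ctx w_sq) auto
    then show ?thesis unfolding e cs ci by simp
  next
    case 3
    then have tk: "?t k = k" by simp
    have push: "weq (Suc m) (i # rev c) (rev c @ [i])"
      using Suc.prems 3 by (intro weq_push) (auto simp: c_def)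
    have push2: "weq (Suc m) (i # c) (c @ [i])"
      using Suc.prems 3 by (intro weq_push) (auto simp: c_def)
    have "sword (rev c) \<circ> ?t = ?t \<circ> sword (rev c)" using weq_sword[OF push] by (simp add: sword_append)
    then have tau': "sword (rev c) \<circ> ?t \<circ> \<sigma> = ?t \<circ> \<tau>" unfolding \<tau>_def by (simp add: comp_assoc)
    have e: "can (Suc m) (?t \<circ> \<sigma>) = c @ can m (?t \<circ> \<tau>)" unfolding cs' tk c_def[symmetric] tau' ..
    have "weq m (i # can m \<tau>) (can m (?t \<circ> \<tau>))" using Suc.hyps[OF f(3), of i] Suc.prems 3 f(2) by (simp add: comp_def)
    then have IH: "weq (Suc m) (i # can m \<tau>) (can m (?t \<circ> \<tau>))" by (rule weq_mono) simp
    have a: "weq (Suc m) (i # c @ can m \<tau>) (c @ (i # can m \<tau>))"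
      using weq_app[OF push2 w_refl[of _ "can m \<tau>"]] by simp
    have b: "weq (Suc m) (c @ (i # can m \<tau>)) (c @ can m (?t \<circ> \<tau>))"
      using weq_app[OF w_refl[of _ c] IH] by simp
    show ?thesis unfolding e cs using w_trans[OF a b] by simp
  next
    case 4
    obtain j where ij: "i = Suc j" using 4 by (cases i) auto
    have kj: "k \<le> j" using 4 ij by simp
    have jm: "Suc j < Suc m" using Suc.prems ij by simp
    have k1: "1 \<le> k" by (rule f(1))
    have tk: "?t k = k" using 4 by simp
    define A where "A = [k..<j]"
    define B where "B = [Suc (Suc j)..<Suc m]"
    have split: "c = A @ [j, Suc j] @ B"
    proof -
      have "[k..<j + (Suc m - j)] = [k..<j] @ [j..<j + (Suc m - j)]" using kj by (rule upt_add_eq_append)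
      then have "[k..<Suc m] = [k..<j] @ [j..<Suc m]" using jm by simp
      moreover have "[j..<Suc m] = j # Suc j # [Suc (Suc j)..<Suc m]" using jm by (simp add: upt_conv_Cons)
      ultimately show ?thesis unfolding c_def A_def B_def by simp
    qed
    have pushA: "weq (Suc m) (Suc j # A) (A @ [Suc j])"
      using jm k1 by (intro weq_push) (auto simp: A_def)
    have br: "weq (Suc m) [Suc j, j, Suc j] [j, Suc j, j]"
    proof (rule w_sym)
      show "weq (Suc m) [j, Suc j, j] [Suc j, j, Suc j]" using jm k1 kj by (intro w_braid) auto
    qed
    have pushB: "weq (Suc m) (j # B) (B @ [j])"
      using jm k1 kj by (intro weq_push) (auto simp: B_def)
    have s1: "weq (Suc m) (Suc j # c) (A @ [Suc j, j, Suc j] @ B)"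
      unfolding split using weq_app[OF pushA w_refl[of _ "[j, Suc j] @ B"]] by simp
    have s2: "weq (Suc m) (A @ [Suc j, j, Suc j] @ B) (A @ [j, Suc j] @ (j # B))"
      using w_ctx[OF br, of A B] by simp
    have s3: "weq (Suc m) (A @ [j, Suc j] @ (j # B)) (c @ [j])"
      unfolding split using weq_app[OF w_refl[of _ "A @ [j, Suc j]"] pushB] by simp
    have word: "weq (Suc m) (Suc j # c) (c @ [j])" using w_trans[OF w_trans[OF s1 s2] s3] .
    have "weq (Suc m) (rev c @ [Suc j]) (j # rev c)" using weq_rev[OF word] by simp
    then have "sword (rev c @ [Suc j]) = sword (j # rev c)" by (rule weq_sword)
    then have "sword (rev c) \<circ> transpose (Suc j) (Suc (Suc j)) = transpose j (Suc j) \<circ> sword (rev c)"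
      by (simp add: sword_append)
    then have tau': "sword (rev c) \<circ> ?t \<circ> \<sigma> = transpose j (Suc j) \<circ> \<tau>" unfolding \<tau>_def ij by (simp add: comp_assoc)
    have e: "can (Suc m) (?t \<circ> \<sigma>) = c @ can m (transpose j (Suc j) \<circ> \<tau>)" unfolding cs' tk c_def[symmetric] tau' ..
    have "weq m (j # can m \<tau>) (can m (transpose j (Suc j) \<circ> \<tau>))" using Suc.hyps[OF f(3), of j] jm k1 kj by (simp add: comp_def)
    then have IH: "weq (Suc m) (j # can m \<tau>) (can m (transpose j (Suc j) \<circ> \<tau>))" by (rule weq_mono) simp
    have a: "weq (Suc m) (Suc j # c @ can m \<tau>) (c @ (j # can m \<tau>))"
      using weq_app[OF word w_refl[of _ "can m \<tau>"]] by simp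
    have b: "weq (Suc m) (c @ (j # can m \<tau>)) (c @ can m (transpose j (Suc j) \<circ> \<tau>))"
      using weq_app[OF w_refl[of _ c] IH] by simp
    show ?thesis unfolding e cs using w_trans[OF a b] ij by simp
  qed
qed

lemma weq_can: "set w \<subseteq> {1..<n} \<Longrightarrow> weq n w (can n (sword w))"
proof (induct w)
  case Nil show ?case using can_id[of n] w_refl[of n "[]"] by (simp add: id_def)
next
  case (Cons i w)
  have a: "weq n (i # w) (i # can n (sword w))" using Cons by (intro weq_Cons) simp
  have b: "weq n (i # can n (sword w)) (can n (sword (i # w)))"
    using weq_can_step[OF sword_permutes[of w n], of i] Cons.prems by simp
  show ?case by (rule w_trans[OF a b])
qed

declare upt_Suc[simp]

datatype 'a gen = Rg nat | Pg 'a

fun ev :: "('v \<times> 'v \<Rightarrow> 'v \<times> 'v \<Rightarrow> complex) \<Rightarrow> ('a \<Rightarrow> ('w \<times> 'v \<Rightarrow> 'w \<times> 'v \<Rightarrow> complex)) \<Rightarrow> nat \<Rightarrow> 'a gen \<Rightarrow> ('w::finite,'v::finite) lop" where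
  "ev R \<pi> n (Rg i) = Rop R n i"
| "ev R \<pi> n (Pg t) = Piop n (\<pi> t)"

definition Gp :: "('v \<times> 'v \<Rightarrow> 'v \<times> 'v \<Rightarrow> complex) \<Rightarrow> ('a \<Rightarrow> ('w \<times> 'v \<Rightarrow> 'w \<times> 'v \<Rightarrow> complex)) \<Rightarrow> nat \<Rightarrow> 'a gen list \<Rightarrow> ('w::finite,'v::finite) lop" where
  "Gp R \<pi> n w = opprod n (map (ev R \<pi> n) w)"

lemma supp_ev[simp]: "supp n (ev R \<pi> n g)" by (cases g) simp_all

lemma Gp_append: "Gp R \<pi> n (u @ v) = opmul n (Gp R \<pi> n u) (Gp R \<pi> n v)"
  unfolding Gp_def by (simp add: opprod_append)

lemma supp_Gp[simp]: "supp n (Gp R \<pi> n u)" unfolding Gp_def by simp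

inductive geq :: "('a, 'b) monoid_scheme \<Rightarrow> nat \<Rightarrow> bool \<Rightarrow> 'a gen list \<Rightarrow> 'a gen list \<Rightarrow> bool" for T n b where
  g_refl: "geq T n b w w"
| g_sym: "geq T n b u v \<Longrightarrow> geq T n b v u"
| g_trans: "geq T n b u v \<Longrightarrow> geq T n b v w \<Longrightarrow> geq T n b u w"
| g_ctx: "geq T n b u v \<Longrightarrow> geq T n b (a @ u @ c) (a @ v @ c)"
| g_sq: "1 \<le> i \<Longrightarrow> i < n \<Longrightarrow> geq T n b [Rg i, Rg i] []"
| g_braid: "1 \<le> i \<Longrightarrow> Suc i < n \<Longrightarrow> geq T n b [Rg i, Rg (Suc i), Rg i] [Rg (Suc i), Rg i, Rg (Suc i)]"
| g_comm: "1 \<le> i \<Longrightarrow> i + 2 \<le> j \<Longrightarrow> j < n \<Longrightarrow> geq T n b [Rg i, Rg j] [Rg j, Rg i]"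
| g_PR: "2 \<le> j \<Longrightarrow> j < n \<Longrightarrow> geq T n b [Pg t, Rg j] [Rg j, Pg t]"
| g_PP: "t \<in> carrier T \<Longrightarrow> t' \<in> carrier T \<Longrightarrow> geq T n b [Pg t, Pg t'] [Pg (t \<otimes>\<^bsub>T\<^esub> t')]"
| g_P1: "geq T n b [Pg \<one>\<^bsub>T\<^esub>] []"
| g_ext: "b \<Longrightarrow> 2 \<le> n \<Longrightarrow> t \<in> carrier T \<Longrightarrow> t' \<in> carrier T \<Longrightarrow>
     geq T n b [Rg 1, Pg t, Rg 1, Pg t'] [Pg t', Rg 1, Pg t, Rg 1]"

lemma ev_geq:
  assumes "geq T n b u v" "mm R R = mid" "YBE R" "\<pi> \<one>\<^bsub>T\<^esub> = mid"
    "\<forall>s\<in>carrier T. \<forall>t\<in>carrier T. \<pi> (s \<otimes>\<^bsub>T\<^esub> t) = mm (\<pi> s) (\<pi> t)" "1 \<le> n"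
    "b \<Longrightarrow> ext_reflection T \<pi> R"
  shows "(Gp R \<pi> n u :: ('w::finite,'v::finite) lop) = Gp R \<pi> n v"
  using assms(1)
proof (induct rule: geq.induct)
  case (g_ctx u v a c) then show ?case by (simp add: Gp_append)
next
  case (g_sq i) then show ?case using C_sq[OF assms(2), of i n] by (simp add: Gp_def)
next
  case (g_braid i) then show ?case using C_braid[OF assms(3), of i n] by (simp add: Gp_def)
next
  case (g_comm i j) then show ?case using C_comm[of i j n R] by (simp add: Gp_def)
next
  case (g_PR j t) then show ?case using C_PR[of j n "\<pi> t" R] by (simp add: Gp_def)
next
  case (g_PP t t') then show ?case using C_PP[OF assms(6), of "\<pi> t" "\<pi> t'"] assms(5) by (simp add: Gp_def)
next
  case g_P1 then show ?case using C_P1[OF assms(6)] assms(4) by (simp add: Gp_def)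
next
  case (g_ext t t')
  have "(opprod 2 [Rop R 2 1, Piop 2 (\<pi> t), Rop R 2 1, Piop 2 (\<pi> t')] :: ('w,'v) lop) = opprod 2 [Piop 2 (\<pi> t'), Rop R 2 1, Piop 2 (\<pi> t), Rop R 2 1]"
    using assms(7)[OF g_ext(1)] g_ext unfolding ext_reflection_def by blast
  from C_ext_gen[OF g_ext(2) this] show ?case by (simp add: Gp_def)
qed simp_all

lemma weq_geq: "weq n u v \<Longrightarrow> geq T n b (map Rg u) (map Rg v)"
proof (induct rule: weq.induct)
  case (w_refl w) show ?case by (rule g_refl)
next
  case (w_sym u v) then show ?case by (simp add: g_sym)
next
  case (w_trans u v w) then show ?case by (meson g_trans)
next
  case (w_ctx u v a c) then show ?case using g_ctx[of T n b "map Rg u" "map Rg v" "map Rg a" "map Rg c"] by simp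
next
  case (w_sq i) then show ?case using g_sq[of i n T b] by simp
next
  case (w_braid i) then show ?case using g_braid[of i n T b] by simp
next
  case (w_comm i j) then show ?case using g_comm[of i j n T b] by simp
qed

lemmas geq_trans[trans] = g_trans

lemma geq_app: "geq T n b u u' \<Longrightarrow> geq T n b v v' \<Longrightarrow> geq T n b (u @ v) (u' @ v')"
proof -
  assume a: "geq T n b u u'" and b: "geq T n b v v'"
  have 1: "geq T n b (u @ v) (u' @ v)" using g_ctx[OF a, of "[]" v] by simp
  have 2: "geq T n b (u' @ v) (u' @ v')" using g_ctx[OF b, of u' "[]"] by simp
  show ?thesis by (rule g_trans[OF 1 2])
qed

lemma geq_appL: "geq T n b v v' \<Longrightarrow> geq T n b (u @ v) (u @ v')"
  by (rule geq_app[OF g_refl])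
lemma geq_appR: "geq T n b u u' \<Longrightarrow> geq T n b (u @ v) (u' @ v)"
  by (rule geq_app[OF _ g_refl])
lemma geq_mid: "geq T n b u u' \<Longrightarrow> geq T n b (a @ u @ c) (a @ u' @ c)"
  by (rule g_ctx)

definition comm_ok :: "nat \<Rightarrow> nat \<Rightarrow> 'a gen \<Rightarrow> bool" where
  "comm_ok n i g = (case g of Rg k \<Rightarrow> 1 \<le> k \<and> k < n \<and> (i + 2 \<le> k \<or> k + 2 \<le> i) | Pg t \<Rightarrow> 2 \<le> i)"

lemma geq_pair: assumes "1 \<le> i" "i < n" "comm_ok n i g" shows "geq T n b [Rg i, g] [g, Rg i]"
proof (cases g)
  case (Rg k)
  show ?thesis
  proof (cases "i + 2 \<le> k")
    case True then show ?thesis using assms Rg by (auto simp: comm_ok_def intro: g_comm)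
  next
    case False
    then have "geq T n b [Rg k, Rg i] [Rg i, Rg k]" using assms Rg by (intro g_comm) (auto simp: comm_ok_def)
    then show ?thesis using Rg by (simp add: g_sym)
  qed
next
  case (Pg t)
  then have "geq T n b [Pg t, Rg i] [Rg i, Pg t]" using assms by (intro g_PR) (auto simp: comm_ok_def)
  then show ?thesis using Pg by (simp add: g_sym)
qed

lemma geq_push: "1 \<le> i \<Longrightarrow> i < n \<Longrightarrow> \<forall>g\<in>set w. comm_ok n i g \<Longrightarrow> geq T n b (Rg i # w) (w @ [Rg i])"
proof (induct w)
  case Nil then show ?case by (simp add: g_refl)
next
  case (Cons g w)
  have "geq T n b (Rg i # g # w) (g # Rg i # w)"
    using g_ctx[OF geq_pair[of i n g T b], of "[]" w] Cons.prems by simp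
  also have "geq T n b (g # Rg i # w) (g # w @ [Rg i])"
    using geq_appL[OF Cons.hyps, of "[g]"] Cons.prems by simp
  finally show ?case by simp
qed

definition Xw :: "nat \<Rightarrow> 'a \<Rightarrow> 'a gen list" where
  "Xw j t = map Rg (rev [1..<j]) @ [Pg t] @ map Rg [1..<j]"

lemma Xw_1: "Xw 1 t = [Pg t]" by (simp add: Xw_def)

lemma Xw_Suc: "1 \<le> j \<Longrightarrow> Xw (Suc j) t = Rg j # Xw j t @ [Rg j]"
  by (simp add: Xw_def upt_Suc_append)

lemma set_Xw: "set (Xw j t) = Rg ` {1..<j} \<union> {Pg t}"
  by (auto simp: Xw_def)

lemma RR_inv: "set w \<subseteq> {1..<n} \<Longrightarrow> geq T n b (map Rg w @ map Rg (rev w)) []"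
proof (induct w)
  case Nil then show ?case by (simp add: g_refl)
next
  case (Cons i w)
  have "geq T n b ([Rg i] @ (map Rg w @ map Rg (rev w)) @ [Rg i]) ([Rg i] @ [] @ [Rg i])"
    using Cons by (intro g_ctx) simp
  also have "geq T n b ([Rg i] @ [] @ [Rg i]) []" using Cons.prems by (simp add: g_sq)
  finally show ?case by simp
qed

lemma X_PP: assumes "t \<in> carrier T" "t' \<in> carrier T" "j \<le> n"
  shows "geq T n b (Xw j t @ Xw j t') (Xw j (t \<otimes>\<^bsub>T\<^esub> t'))"
proof -
  let ?L = "map Rg (rev [1..<j])" and ?L' = "map Rg [1..<j]"
  have "geq T n b ((?L @ [Pg t]) @ (?L' @ ?L) @ ([Pg t'] @ ?L')) ((?L @ [Pg t]) @ [] @ ([Pg t'] @ ?L'))"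
    using assms by (intro g_ctx RR_inv) auto
  also have "geq T n b ((?L @ [Pg t]) @ [] @ ([Pg t'] @ ?L')) (?L @ [Pg t, Pg t'] @ ?L')" by (simp add: g_refl)
  also have "geq T n b (?L @ [Pg t, Pg t'] @ ?L') (?L @ [Pg (t \<otimes>\<^bsub>T\<^esub> t')] @ ?L')"
    using assms by (intro g_ctx g_PP)
  finally show ?thesis by (simp add: Xw_def)
qed

lemma X_one: assumes "j \<le> n" shows "geq T n b (Xw j \<one>\<^bsub>T\<^esub>) []"
proof -
  let ?L = "map Rg (rev [1..<j])" and ?L' = "map Rg [1..<j]"
  have "geq T n b (?L @ [Pg \<one>\<^bsub>T\<^esub>] @ ?L') (?L @ [] @ ?L')" by (intro g_ctx g_P1)
  also have "geq T n b (?L @ [] @ ?L') []"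
    using RR_inv[of "rev [1..<j]" n T b] assms by auto
  finally show ?thesis by (simp add: Xw_def)
qed

lemma X_conj_low: assumes "j < i" "1 \<le> j" "i < n"
  shows "geq T n b (Rg i # Xw j t) (Xw j t @ [Rg i])"
  using assms by (intro geq_push) (auto simp: set_Xw comm_ok_def)

lemma X_conj_eq: assumes "1 \<le> i" "i < n"
  shows "geq T n b (Rg i # Xw i t) (Xw (Suc i) t @ [Rg i])"
proof -
  have "geq T n b [Rg i, Rg i] []" using assms by (intro g_sq)
  then have "geq T n b ((Rg i # Xw i t) @ [] ) ((Rg i # Xw i t) @ [Rg i, Rg i])"
    by (intro geq_appL) (rule g_sym)
  then show ?thesis using assms by (simp add: Xw_Suc)
qed

lemma X_conj_up: assumes "1 \<le> i" "i < n"
  shows "geq T n b (Rg i # Xw (Suc i) t) (Xw i t @ [Rg i])"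
proof -
  have "geq T n b ([] @ [Rg i, Rg i] @ (Xw i t @ [Rg i])) ([] @ [] @ (Xw i t @ [Rg i]))"
    using assms by (intro g_ctx g_sq)
  then show ?thesis using assms by (simp add: Xw_Suc)
qed

lemma X_conj_high: assumes "1 \<le> i" "i + 2 \<le> j" "j \<le> n"
  shows "geq T n b (Rg i # Xw j t) (Xw j t @ [Rg i])"
  using assms
proof (induct j)
  case 0 then show ?case by simp
next
  case (Suc j)
  show ?case
  proof (cases "i + 2 \<le> j")
    case True
    have j1: "1 \<le> j" using True Suc.prems by simp
    have IH: "geq T n b (Rg i # Xw j t) (Xw j t @ [Rg i])" using Suc True by simp
    have c1: "geq T n b [Rg i, Rg j] [Rg j, Rg i]" using True Suc.prems by (intro g_comm) auto
    have "geq T n b (Rg i # Xw (Suc j) t) (Rg j # Rg i # Xw j t @ [Rg j])"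
      using g_ctx[OF c1, of "[]" "Xw j t @ [Rg j]"] j1 by (simp add: Xw_Suc)
    also have "geq T n b ... (Rg j # Xw j t @ [Rg i, Rg j])"
      using g_ctx[OF IH, of "[Rg j]" "[Rg j]"] by simp
    also have "geq T n b ... (Rg j # Xw j t @ [Rg j, Rg i])"
      using g_ctx[OF c1, of "Rg j # Xw j t" "[]"] by simp
    finally show ?thesis using j1 by (simp add: Xw_Suc)
  next
    case False
    then have j: "j = Suc i" using Suc.prems by simp
    have X2: "Xw (Suc j) t = [Rg (Suc i), Rg i] @ Xw i t @ [Rg i, Rg (Suc i)]"
      using j Suc.prems by (simp add: Xw_Suc)
    have br: "geq T n b [Rg i, Rg (Suc i), Rg i] [Rg (Suc i), Rg i, Rg (Suc i)]"
      using Suc.prems j by (intro g_braid) auto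
    have lo: "geq T n b (Rg (Suc i) # Xw i t) (Xw i t @ [Rg (Suc i)])"
      using Suc.prems j by (intro X_conj_low) auto
    have "geq T n b (Rg i # Xw (Suc j) t) ([Rg (Suc i), Rg i, Rg (Suc i)] @ Xw i t @ [Rg i, Rg (Suc i)])"
      using g_ctx[OF br, of "[]" "Xw i t @ [Rg i, Rg (Suc i)]"] X2 by simp
    also have "geq T n b ... ([Rg (Suc i), Rg i] @ Xw i t @ [Rg (Suc i), Rg i, Rg (Suc i)])"
      using g_ctx[OF lo, of "[Rg (Suc i), Rg i]" "[Rg i, Rg (Suc i)]"] by simp
    also have "geq T n b ... ([Rg (Suc i), Rg i] @ Xw i t @ [Rg i, Rg (Suc i), Rg i])"
      using g_ctx[OF g_sym[OF br], of "[Rg (Suc i), Rg i] @ Xw i t" "[]"] by simp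
    finally show ?thesis using X2 by simp
  qed
qed

lemma X_conj: assumes "1 \<le> i" "i < n" "1 \<le> j" "j \<le> n"
  shows "geq T n b (Rg i # Xw j t) (Xw (transpose i (Suc i) j) t @ [Rg i])"
proof -
  consider "j < i" | "j = i" | "j = Suc i" | "i + 2 \<le> j" by linarith
  then show ?thesis
  proof cases
    case 1 then show ?thesis using assms X_conj_low[of j i n T b t] by simp
  next
    case 2 then show ?thesis using assms X_conj_eq[of i n T b t] by simp
  next
    case 3 then show ?thesis using assms X_conj_up[of i n T b t] by simp
  next
    case 4 then show ?thesis using assms X_conj_high[of i j n T b t] by simp
  qed
qed

lemma geq_conj_form:
  assumes k: "1 \<le> k" "k < n"
    and A: "geq T n b (Rg k # A) (A' @ [Rg k])"
  shows "geq T n b A' (Rg k # A @ [Rg k])"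
proof -
  have 1: "geq T n b (A' @ []) (A' @ [Rg k, Rg k])" using k by (intro geq_appL g_sym[OF g_sq])
  have 2: "geq T n b ((A' @ [Rg k]) @ [Rg k]) ((Rg k # A) @ [Rg k])" by (rule geq_appR[OF g_sym[OF A]])
  show ?thesis using g_trans[OF 1] 2 by simp
qed

lemma geq_conj:
  assumes k: "1 \<le> k" "k < n"
    and A: "geq T n b (Rg k # YA) (XA @ [Rg k])"
    and B: "geq T n b (Rg k # YB) (XB @ [Rg k])"
    and AB: "geq T n b (YA @ YB) (YB @ YA)"
  shows "geq T n b (XA @ XB) (XB @ XA)"
proof -
  have a: "geq T n b XA (Rg k # YA @ [Rg k])" by (rule geq_conj_form[OF k A])
  have b: "geq T n b XB (Rg k # YB @ [Rg k])" by (rule geq_conj_form[OF k B])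
  have "geq T n b (XA @ XB) ((Rg k # YA @ [Rg k]) @ (Rg k # YB @ [Rg k]))" by (rule geq_app[OF a b])
  also have "geq T n b ... ([Rg k] @ YA @ [] @ YB @ [Rg k])"
    using g_ctx[OF g_sq[OF k], where a="Rg k # YA" and c="YB @ [Rg k]" and T=T and b=b] by simp
  also have "geq T n b ... ([Rg k] @ (YB @ YA) @ [Rg k])" using g_ctx[OF AB, of "[Rg k]" "[Rg k]"] by simp
  also have "geq T n b ... ([Rg k] @ YB @ [Rg k, Rg k] @ YA @ [Rg k])"
    using g_ctx[OF g_sym[OF g_sq[OF k]], where a="Rg k # YB" and c="YA @ [Rg k]" and T=T and b=b] by simp
  also have "geq T n b ... (XB @ XA)" using g_sym[OF geq_app[OF b a]] by simp
  finally show ?thesis .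
qed

lemma X_adj:
  assumes b and "1 \<le> i" "Suc i \<le> n" "t \<in> carrier T" "t' \<in> carrier T"
  shows "geq T n b (Xw i t @ Xw (Suc i) t') (Xw (Suc i) t' @ Xw i t)"
  using assms(2-5)
proof (induct i arbitrary: t t')
  case 0 then show ?case by simp
next
  case (Suc i)
  show ?case
  proof (cases "i = 0")
    case True
    have "geq T n b [Rg 1, Pg t', Rg 1, Pg t] [Pg t, Rg 1, Pg t', Rg 1]"
      using Suc.prems assms(1) True by (intro g_ext) auto
    then have "geq T n b [Pg t, Rg 1, Pg t', Rg 1] [Rg 1, Pg t', Rg 1, Pg t]" by (rule g_sym)
    then show ?thesis using True by (simp add: Xw_def)
  next
    case False
    then have i1: "1 \<le> i" by simp
    have IH: "\<And>s s'. s \<in> carrier T \<Longrightarrow> s' \<in> carrier T \<Longrightarrow> geq T n b (Xw i s @ Xw (Suc i) s') (Xw (Suc i) s' @ Xw i s)"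
      using Suc.hyps i1 Suc.prems by simp
    have c1: "geq T n b (Xw i t @ Xw (Suc (Suc i)) t') (Xw (Suc (Suc i)) t' @ Xw i t)"
    proof (rule geq_conj[of "Suc i" n])
      show "geq T n b (Rg (Suc i) # Xw i t) (Xw i t @ [Rg (Suc i)])"
        using Suc.prems i1 by (intro X_conj_low) auto
      show "geq T n b (Rg (Suc i) # Xw (Suc i) t') (Xw (Suc (Suc i)) t' @ [Rg (Suc i)])"
        using Suc.prems i1 by (intro X_conj_eq) auto
      show "geq T n b (Xw i t @ Xw (Suc i) t') (Xw (Suc i) t' @ Xw i t)" using IH Suc.prems by simp
    qed (use Suc.prems in auto)
    show ?thesis
    proof (rule geq_conj[of i n])
      show "geq T n b (Rg i # Xw i t) (Xw (Suc i) t @ [Rg i])"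
        using Suc.prems i1 by (intro X_conj_eq) auto
      show "geq T n b (Rg i # Xw (Suc (Suc i)) t') (Xw (Suc (Suc i)) t' @ [Rg i])"
        using Suc.prems i1 by (intro X_conj_high) auto
      show "geq T n b (Xw i t @ Xw (Suc (Suc i)) t') (Xw (Suc (Suc i)) t' @ Xw i t)" by (rule c1)
    qed (use Suc.prems i1 in auto)
  qed
qed

lemma X_comm:
  assumes b and "1 \<le> i" "i < j" "j \<le> n" "t \<in> carrier T" "t' \<in> carrier T"
  shows "geq T n b (Xw i t @ Xw j t') (Xw j t' @ Xw i t)"
  using assms(3-6)
proof (induct j arbitrary: t')
  case 0 then show ?case by simp
next
  case (Suc j)
  show ?case
  proof (cases "j = i")
    case True then show ?thesis using X_adj[OF assms(1) assms(2)] Suc.prems by simp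
  next
    case False
    then have ij: "i < j" using Suc.prems by simp
    show ?thesis
    proof (rule geq_conj[of j n])
      show "geq T n b (Rg j # Xw i t) (Xw i t @ [Rg j])"
        using Suc.prems ij assms(2) by (intro X_conj_low) auto
      show "geq T n b (Rg j # Xw j t') (Xw (Suc j) t' @ [Rg j])"
        using Suc.prems ij assms(2) by (intro X_conj_eq) auto
      show "geq T n b (Xw i t @ Xw j t') (Xw j t' @ Xw i t)" using Suc ij by simp
    qed (use Suc.prems ij assms(2) in auto)
  qed
qed

lemma X_comm2:
  assumes b and "1 \<le> i" "1 \<le> j" "i \<noteq> j" "i \<le> n" "j \<le> n" "t \<in> carrier T" "t' \<in> carrier T"
  shows "geq T n b (Xw i t @ Xw j t') (Xw j t' @ Xw i t)"
proof (cases "i < j")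
  case True then show ?thesis by (intro X_comm[OF assms(1)]) (use assms in auto)
next
  case False
  have "geq T n b (Xw j t' @ Xw i t) (Xw i t @ Xw j t')" by (rule X_comm[OF assms(1)]) (use assms False in auto)
  then show ?thesis by (rule g_sym)
qed

definition DL :: "nat list \<Rightarrow> (nat \<Rightarrow> 'a) \<Rightarrow> 'a gen list" where
  "DL l d = concat (map (\<lambda>j. Xw j (d j)) l)"

lemma DL_Nil[simp]: "DL [] d = []" by (simp add: DL_def)
lemma DL_Cons[simp]: "DL (j # l) d = Xw j (d j) @ DL l d" by (simp add: DL_def)
lemma DL_append: "DL (l @ l') d = DL l d @ DL l' d" by (simp add: DL_def)

lemma X_DL_comm:
  assumes b "1 \<le> a" "a \<le> n" "a \<notin> set l" "set l \<subseteq> {1..n}" "t \<in> carrier T" "\<forall>j\<in>set l. d j \<in> carrier T"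
  shows "geq T n b (Xw a t @ DL l d) (DL l d @ Xw a t)"
  using assms(4-7)
proof (induct l)
  case Nil then show ?case by (simp add: g_refl)
next
  case (Cons j l)
  have "geq T n b (Xw a t @ Xw j (d j) @ DL l d) ((Xw j (d j) @ Xw a t) @ DL l d)"
    using geq_appR[OF X_comm2[OF assms(1), where i=a and j=j and t=t and t'="d j"]] Cons.prems assms by auto
  also have "geq T n b ... (Xw j (d j) @ DL l d @ Xw a t)"
    using geq_appL[OF Cons.hyps, of "Xw j (d j)"] Cons.prems by simp
  finally show ?case by simp
qed

lemma DL_mult:
  assumes b "distinct l" "set l \<subseteq> {1..n}" "\<forall>j\<in>set l. d j \<in> carrier T \<and> e j \<in> carrier T"
  shows "geq T n b (DL l d @ DL l e) (DL l (\<lambda>j. d j \<otimes>\<^bsub>T\<^esub> e j))"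
  using assms(2-4)
proof (induct l)
  case Nil then show ?case by (simp add: g_refl)
next
  case (Cons j l)
  have "geq T n b (Xw j (d j) @ (DL l d @ Xw j (e j)) @ DL l e) (Xw j (d j) @ (Xw j (e j) @ DL l d) @ DL l e)"
    using Cons.prems by (intro g_ctx g_sym[OF X_DL_comm[OF assms(1)]]) auto
  also have "geq T n b ... ([] @ (Xw j (d j) @ Xw j (e j)) @ (DL l d @ DL l e))" by (simp add: g_refl)
  also have "geq T n b ... ([] @ Xw j (d j \<otimes>\<^bsub>T\<^esub> e j) @ (DL l d @ DL l e))"
    using Cons.prems by (intro g_ctx X_PP) auto
  also have "geq T n b ... (Xw j (d j \<otimes>\<^bsub>T\<^esub> e j) @ DL l (\<lambda>j. d j \<otimes>\<^bsub>T\<^esub> e j))"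
    using geq_appL[OF Cons.hyps] Cons.prems by simp
  finally show ?case by simp
qed

lemma DL_push:
  assumes "1 \<le> i" "i < n" "set l \<subseteq> {1..n}"
  shows "geq T n b (Rg i # DL l d) (concat (map (\<lambda>j. Xw (transpose i (Suc i) j) (d j)) l) @ [Rg i])"
  using assms(3)
proof (induct l)
  case Nil then show ?case by (simp add: g_refl)
next
  case (Cons j l)
  have "geq T n b ((Rg i # Xw j (d j)) @ DL l d) ((Xw (transpose i (Suc i) j) (d j) @ [Rg i]) @ DL l d)"
    using Cons.prems assms by (intro geq_appR X_conj) auto
  also have "geq T n b ... (Xw (transpose i (Suc i) j) (d j) @ (concat (map (\<lambda>j. Xw (transpose i (Suc i) j) (d j)) l) @ [Rg i]))"
    using geq_appL[OF Cons.hyps, of "Xw (transpose i (Suc i) j) (d j)"] Cons.prems by simp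
  finally show ?case by simp
qed

lemma DL_swap:
  assumes b "1 \<le> i" "i < n" "\<forall>j. d j \<in> carrier T"
  shows "geq T n b (concat (map (\<lambda>j. Xw (transpose i (Suc i) j) (d j)) [1..<Suc n])) (DL [1..<Suc n] (d \<circ> transpose i (Suc i)))"
proof -
  let ?s = "transpose i (Suc i)"
  have "[1..<1 + (Suc n - 1)] = [1..<1] @ [1..<1]" if False using that by simp
  have u1: "[1..<Suc n] = [1..<i] @ [i..<Suc n]"
  proof -
    have "[1..<1 + (i - 1) + (Suc n - i)] = [1..<1 + (i - 1)] @ [1 + (i - 1)..<1 + (i - 1) + (Suc n - i)]"
      by (rule upt_add_eq_append) simp
    then show ?thesis using assms by simp
  qed
  have u2: "[i..<Suc n] = i # Suc i # [Suc (Suc i)..<Suc n]" using assms by (simp add: upt_conv_Cons)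
  have L: "concat (map (\<lambda>j. Xw (?s j) (d j)) [1..<i]) = DL [1..<i] (d \<circ> ?s)"
    unfolding DL_def by (rule arg_cong[where f=concat], rule map_cong) auto
  have H: "concat (map (\<lambda>j. Xw (?s j) (d j)) [Suc (Suc i)..<Suc n]) = DL [Suc (Suc i)..<Suc n] (d \<circ> ?s)"
    unfolding DL_def by (rule arg_cong[where f=concat], rule map_cong) auto
  have M: "geq T n b (Xw (Suc i) (d i) @ Xw i (d (Suc i))) (Xw i (d (Suc i)) @ Xw (Suc i) (d i))"
    by (rule g_sym, rule X_comm[OF assms(1)]) (use assms in auto)
  have "geq T n b (DL [1..<i] (d \<circ> ?s) @ (Xw (Suc i) (d i) @ Xw i (d (Suc i))) @ DL [Suc (Suc i)..<Suc n] (d \<circ> ?s))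
      (DL [1..<i] (d \<circ> ?s) @ (Xw i (d (Suc i)) @ Xw (Suc i) (d i)) @ DL [Suc (Suc i)..<Suc n] (d \<circ> ?s))"
    by (rule g_ctx[OF M])
  then show ?thesis unfolding u1 u2 using L H by (simp add: DL_append)
qed

lemma D_conj:
  assumes b "1 \<le> i" "i < n" "\<forall>j. d j \<in> carrier T"
  shows "geq T n b (Rg i # DL [1..<Suc n] d) (DL [1..<Suc n] (d \<circ> transpose i (Suc i)) @ [Rg i])"
proof -
  have "geq T n b (Rg i # DL [1..<Suc n] d) (concat (map (\<lambda>j. Xw (transpose i (Suc i) j) (d j)) [1..<Suc n]) @ [Rg i])"
    using assms by (intro DL_push) auto
  also have "geq T n b ... (DL [1..<Suc n] (d \<circ> transpose i (Suc i)) @ [Rg i])"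
    using assms by (intro geq_appR DL_swap) auto
  finally show ?thesis .
qed

lemma D_word:
  assumes b "set w \<subseteq> {1..<n}" "\<forall>j. d j \<in> carrier T"
  shows "geq T n b (map Rg w @ DL [1..<Suc n] d) (DL [1..<Suc n] (d \<circ> sword (rev w)) @ map Rg w)"
  using assms(2,3)
proof (induct w arbitrary: d)
  case Nil then show ?case by (simp add: g_refl)
next
  case (Cons i w)
  let ?g = "sword (rev w)"
  have IH: "geq T n b (map Rg w @ DL [1..<Suc n] d) (DL [1..<Suc n] (d \<circ> ?g) @ map Rg w)"
    by (rule Cons.hyps) (use Cons.prems in auto)
  have "geq T n b ([Rg i] @ (map Rg w @ DL [1..<Suc n] d)) ([Rg i] @ (DL [1..<Suc n] (d \<circ> ?g) @ map Rg w))"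
    by (rule geq_appL[OF IH])
  also have "geq T n b ... ((DL [1..<Suc n] (d \<circ> ?g \<circ> transpose i (Suc i)) @ [Rg i]) @ map Rg w)"
    using Cons.prems D_conj[OF assms(1), of i n "d \<circ> ?g" T] geq_appR by fastforce
  finally have X: "geq T n b (Rg i # map Rg w @ DL [1..<Suc n] d) (DL [1..<Suc n] (d \<circ> ?g \<circ> transpose i (Suc i)) @ Rg i # map Rg w)"
    by simp
  have eq: "d \<circ> sword (rev (i # w)) = d \<circ> ?g \<circ> transpose i (Suc i)" by (simp add: sword_append fun_eq_iff)
  show ?case unfolding eq list.map append_Cons by (rule X)
qed

lemma Gp_Rg: "Gp R \<pi> n (map Rg w) = opprod n (map (Rop R n) w)"
  by (simp add: Gp_def comp_def)

lemma Gp_Xw: "Gp R \<pi> n (Xw i t) = piPos R n (\<pi> t) i"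
  by (simp add: Gp_def Xw_def piPos_def comp_def)

lemma opprod_Gp_concat: "opprod n (map (\<lambda>i. Gp R \<pi> n (f i)) l) = Gp R \<pi> n (concat (map f l))"
  by (induct l) (simp_all add: Gp_append, simp add: Gp_def)

lemma rhoD_DL: "rhoD R \<pi> n d = Gp R \<pi> n (DL [1..<Suc n] d)"
  unfolding rhoD_def DL_def Gp_Xw[symmetric] by (rule opprod_Gp_concat)

lemma rhoS_can:
  assumes "mm R R = mid" "YBE R" "\<pi> \<one>\<^bsub>T\<^esub> = mid"
    "\<forall>s\<in>carrier T. \<forall>t\<in>carrier T. \<pi> (s \<otimes>\<^bsub>T\<^esub> t) = mm (\<pi> s) (\<pi> t)" "1 \<le> n"
    "\<sigma> permutes {1..n}"
  shows "(rhoS R n \<sigma> :: ('w::finite,'v::finite) lop) = Gp R \<pi> n (map Rg (can n \<sigma>))"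
proof -
  let ?P = "\<lambda>w. set w \<subseteq> {1..<n} \<and> sword w = \<sigma>"
  have ex: "\<exists>w. ?P w" using can_props[OF assms(6)] by blast
  define w where "w = (SOME w. ?P w)"
  have w: "?P w" unfolding w_def using someI_ex[OF ex] .
  have "weq n w (can n \<sigma>)" using weq_can[of w n] w by simp
  then have "geq T n False (map Rg w) (map Rg (can n \<sigma>))" by (rule weq_geq)
  then have "(Gp R \<pi> n (map Rg w) :: ('w,'v) lop) = Gp R \<pi> n (map Rg (can n \<sigma>))"
    by (rule ev_geq[OF _ assms(1-5)]) simp
  then show ?thesis unfolding rhoS_def w_def[symmetric] Gp_Rg .
qed

lemma rho_Gp:
  assumes "mm R R = mid" "YBE R" "\<pi> \<one>\<^bsub>T\<^esub> = mid"
    "\<forall>s\<in>carrier T. \<forall>t\<in>carrier T. \<pi> (s \<otimes>\<^bsub>T\<^esub> t) = mm (\<pi> s) (\<pi> t)" "1 \<le> n"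
    "\<sigma> permutes {1..n}"
  shows "(rho R \<pi> n (d, \<sigma>) :: ('w::finite,'v::finite) lop) = Gp R \<pi> n (DL [1..<Suc n] d @ map Rg (can n \<sigma>))"
  unfolding rho_def using rhoS_can[OF assms] by (simp add: rhoD_DL Gp_append)

lemma inv_sword: "Hilbert_Choice.inv (sword w) = sword (rev w)"
  by (rule inv_unique_comp) (simp_all add: sword_inv_rev sword_rev_inv)

lemma converse_dir:
  fixes T :: "('a, 'b) monoid_scheme"
    and \<pi> :: "'a \<Rightarrow> ('w::finite \<times> 'v::finite \<Rightarrow> 'w \<times> 'v \<Rightarrow> complex)"
    and R :: "'v \<times> 'v \<Rightarrow> 'v \<times> 'v \<Rightarrow> complex"
  assumes grp: "group T" and RR: "mm R R = mid" and Y: "YBE R" and P1: "\<pi> \<one>\<^bsub>T\<^esub> = mid"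
    and PM: "\<forall>s\<in>carrier T. \<forall>t\<in>carrier T. \<pi> (s \<otimes>\<^bsub>T\<^esub> t) = mm (\<pi> s) (\<pi> t)"
    and ER: "ext_reflection T \<pi> R"
  shows "YB_couple T \<pi> R"
  unfolding YB_couple_def
proof (intro allI impI ballI)
  fix n :: nat and g h assume n: "1 \<le> n" and g: "g \<in> wr_carrier T n" and h: "h \<in> wr_carrier T n"
  obtain d \<sigma> where gd: "g = (d, \<sigma>)" by (cases g)
  obtain e \<tau> where he: "h = (e, \<tau>)" by (cases h)
  have d: "\<forall>i. d i \<in> carrier T" and \<sigma>: "\<sigma> permutes {1..n}" using g gd by (auto simp: wr_carrier_def)
  have e: "\<forall>i. e i \<in> carrier T" and \<tau>: "\<tau> permutes {1..n}" using h he by (auto simp: wr_carrier_def)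
  define c where "c = can n \<sigma>"
  define c' where "c' = can n \<tau>"
  have cp: "set c \<subseteq> {1..<n}" "sword c = \<sigma>" using can_props[OF \<sigma>] by (auto simp: c_def)
  have cp': "set c' \<subseteq> {1..<n}" "sword c' = \<tau>" using can_props[OF \<tau>] by (auto simp: c'_def)
  have inv\<sigma>: "Hilbert_Choice.inv \<sigma> = sword (rev c)" using inv_sword[of c] cp by simp
  have \<sigma>\<tau>: "\<sigma> \<circ> \<tau> permutes {1..n}" by (rule permutes_compose[OF \<tau> \<sigma>])
  have mult: "wr_mult T g h = ((\<lambda>i. d i \<otimes>\<^bsub>T\<^esub> (e \<circ> sword (rev c)) i), \<sigma> \<circ> \<tau>)"
    by (simp add: wr_mult_def gd he inv\<sigma>)
  have ecar: "\<forall>i. (e \<circ> sword (rev c)) i \<in> carrier T" using e by simp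
  let ?D = "\<lambda>f. DL [1..<Suc n] f"
  have "geq T n True (?D d @ map Rg c @ ?D e @ map Rg c') (?D d @ (?D (e \<circ> sword (rev c)) @ map Rg c) @ map Rg c')"
    using g_ctx[OF D_word[of True c n e T, OF _ cp(1) e], of "?D d" "map Rg c'"] by simp
  also have "geq T n True ... ((?D d @ ?D (e \<circ> sword (rev c))) @ map Rg (c @ c'))" by (simp add: g_refl)
  also have "geq T n True ... (?D (\<lambda>i. d i \<otimes>\<^bsub>T\<^esub> (e \<circ> sword (rev c)) i) @ map Rg (c @ c'))"
    using d ecar by (intro geq_appR DL_mult) auto
  also have "geq T n True ... (?D (\<lambda>i. d i \<otimes>\<^bsub>T\<^esub> (e \<circ> sword (rev c)) i) @ map Rg (can n (\<sigma> \<circ> \<tau>)))"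
  proof (intro geq_appL weq_geq)
    have "weq n (c @ c') (can n (sword (c @ c')))" using cp cp' by (intro weq_can) auto
    then show "weq n (c @ c') (can n (\<sigma> \<circ> \<tau>))" using cp cp' by (simp add: sword_append)
  qed
  finally have G: "geq T n True (?D d @ map Rg c @ ?D e @ map Rg c') (?D (\<lambda>i. d i \<otimes>\<^bsub>T\<^esub> (e \<circ> sword (rev c)) i) @ map Rg (can n (\<sigma> \<circ> \<tau>)))" .
  have "(Gp R \<pi> n (?D d @ map Rg c @ ?D e @ map Rg c') :: ('w,'v) lop) = Gp R \<pi> n (?D (\<lambda>i. d i \<otimes>\<^bsub>T\<^esub> (e \<circ> sword (rev c)) i) @ map Rg (can n (\<sigma> \<circ> \<tau>)))"
    by (rule ev_geq[OF G RR Y P1 PM n ER])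
  moreover have L: "(rho R \<pi> n (wr_mult T g h) :: ('w,'v) lop) = Gp R \<pi> n (?D (\<lambda>i. d i \<otimes>\<^bsub>T\<^esub> (e \<circ> sword (rev c)) i) @ map Rg (can n (\<sigma> \<circ> \<tau>)))"
    unfolding mult by (rule rho_Gp[OF RR Y P1 PM n \<sigma>\<tau>])
  moreover have Rg: "(rho R \<pi> n g :: ('w,'v) lop) = Gp R \<pi> n (?D d @ map Rg c)"
    unfolding gd c_def by (rule rho_Gp[OF RR Y P1 PM n \<sigma>])
  moreover have Rh: "(rho R \<pi> n h :: ('w,'v) lop) = Gp R \<pi> n (?D e @ map Rg c')"
    unfolding he c'_def by (rule rho_Gp[OF RR Y P1 PM n \<tau>])
  ultimately show "(rho R \<pi> n (wr_mult T g h) :: ('w,'v) lop) = opmul n (rho R \<pi> n g) (rho R \<pi> n h)"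
    by (simp only: Gp_append[symmetric] append_assoc)
qed

lemma rho2:
  fixes T :: "('a, 'b) monoid_scheme"
    and \<pi> :: "'a \<Rightarrow> ('w::finite \<times> 'v::finite \<Rightarrow> 'w \<times> 'v \<Rightarrow> complex)"
    and R :: "'v \<times> 'v \<Rightarrow> 'v \<times> 'v \<Rightarrow> complex"
  assumes RR: "mm R R = mid" and Y: "YBE R" and P1: "\<pi> \<one>\<^bsub>T\<^esub> = mid"
    and PM: "\<forall>s\<in>carrier T. \<forall>t\<in>carrier T. \<pi> (s \<otimes>\<^bsub>T\<^esub> t) = mm (\<pi> s) (\<pi> t)"
  shows "(rho R \<pi> 2 (f, id) :: ('w,'v) lop) = Gp R \<pi> 2 [Pg (f 1), Rg 1, Pg (f 2), Rg 1]"
proof -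
  have "(rho R \<pi> 2 (f, id) :: ('w,'v) lop) = Gp R \<pi> 2 (DL [1..<Suc 2] f @ map Rg (can 2 id))"
    by (rule rho_Gp[OF RR Y P1 PM]) simp_all
  moreover have "[1..<Suc 2] = [1, 2]" by (simp add: upt_rec)
  moreover have "Xw 2 t = [Rg 1, Pg t, Rg 1]" for t :: 'a
    by (simp add: Xw_def upt_rec)
  moreover have "Xw 1 t = [Pg t]" for t :: 'a
    by (simp add: Xw_def)
  ultimately show ?thesis by (simp add: can_id)
qed

lemma forward_dir:
  fixes T :: "('a, 'b) monoid_scheme"
    and \<pi> :: "'a \<Rightarrow> ('w::finite \<times> 'v::finite \<Rightarrow> 'w \<times> 'v \<Rightarrow> complex)"
    and R :: "'v \<times> 'v \<Rightarrow> 'v \<times> 'v \<Rightarrow> complex"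
  assumes grp: "group T" and RR: "mm R R = mid" and Y: "YBE R" and P1: "\<pi> \<one>\<^bsub>T\<^esub> = mid"
    and PM: "\<forall>s\<in>carrier T. \<forall>t\<in>carrier T. \<pi> (s \<otimes>\<^bsub>T\<^esub> t) = mm (\<pi> s) (\<pi> t)"
    and YB: "YB_couple T \<pi> R"
  shows "ext_reflection T \<pi> R"
  unfolding ext_reflection_def
proof (intro ballI)
  fix t t' assume t: "t \<in> carrier T" and t': "t' \<in> carrier T"
  interpret G: group T by (rule grp)
  let ?e = "\<lambda>_::nat. \<one>\<^bsub>T\<^esub>"
  define g where "g = (?e(2 := t), (id :: nat \<Rightarrow> nat))"
  define h where "h = (?e(1 := t'), (id :: nat \<Rightarrow> nat))"
  have gc: "g \<in> wr_carrier T 2" using t unfolding g_def wr_carrier_def by auto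
  have hc: "h \<in> wr_carrier T 2" using t' unfolding h_def wr_carrier_def by auto
  have "(rho R \<pi> 2 (wr_mult T g h) :: ('w,'v) lop) = opmul 2 (rho R \<pi> 2 g) (rho R \<pi> 2 h)"
    using YB gc hc unfolding YB_couple_def by auto
  moreover have "wr_mult T g h = ((\<lambda>i. (?e(2 := t)) i \<otimes>\<^bsub>T\<^esub> (?e(1 := t')) i), id)"
    unfolding wr_mult_def g_def h_def by (simp add: inv_id)
  ultimately have E: "(Gp R \<pi> 2 [Pg t', Rg 1, Pg t, Rg 1] :: ('w,'v) lop) =
       opmul 2 (Gp R \<pi> 2 [Pg \<one>\<^bsub>T\<^esub>, Rg 1, Pg t, Rg 1]) (Gp R \<pi> 2 [Pg t', Rg 1, Pg \<one>\<^bsub>T\<^esub>, Rg 1])"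
    unfolding g_def h_def using t t' by (simp add: rho2[OF RR Y P1 PM])
  have ev: "geq T 2 False u v \<Longrightarrow> (Gp R \<pi> 2 u :: ('w,'v) lop) = Gp R \<pi> 2 v" for u v
    by (rule ev_geq[where b=False, OF _ RR Y P1 PM]) simp_all
  have a: "(Gp R \<pi> 2 [Pg \<one>\<^bsub>T\<^esub>, Rg 1, Pg t, Rg 1] :: ('w,'v) lop) = Gp R \<pi> 2 [Rg 1, Pg t, Rg 1]"
    using ev[OF g_ctx[OF g_P1, where T=T and n=2 and b=False and a="[]" and c="[Rg 1, Pg t, Rg 1]"]] by simp
  have b1: "geq T 2 False [Pg t', Rg 1, Pg \<one>\<^bsub>T\<^esub>, Rg 1] [Pg t', Rg 1, Rg 1]"
    using g_ctx[OF g_P1, where T=T and n=2 and b=False and a="[Pg t', Rg 1]" and c="[Rg 1]"] by simp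
  have b2: "geq T 2 False [Pg t', Rg 1, Rg 1] [Pg t']"
    using g_ctx[OF g_sq[of 1 2 T False], where a="[Pg t']" and c="[]"] by simp
  have b: "(Gp R \<pi> 2 [Pg t', Rg 1, Pg \<one>\<^bsub>T\<^esub>, Rg 1] :: ('w,'v) lop) = Gp R \<pi> 2 [Pg t']"
    by (rule ev[OF g_trans[OF b1 b2]])
  have "(Gp R \<pi> 2 [Rg 1, Pg t, Rg 1, Pg t'] :: ('w,'v) lop) = Gp R \<pi> 2 [Pg t', Rg 1, Pg t, Rg 1]"
    using E unfolding a b by (simp add: Gp_append[symmetric])
  then show "(opprod 2 [Rop R 2 1, Piop 2 (\<pi> t), Rop R 2 1, Piop 2 (\<pi> t')] :: ('w,'v) lop) =
             opprod 2 [Piop 2 (\<pi> t'), Rop R 2 1, Piop 2 (\<pi> t), Rop R 2 1]"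
    by (simp add: Gp_def)
qed

theorem mainTheorem1:
  fixes T :: "('a, 'b) monoid_scheme"
    and \<pi> :: "'a \<Rightarrow> ('w::finite \<times> 'v::finite \<Rightarrow> 'w \<times> 'v \<Rightarrow> complex)"
    and R :: "'v \<times> 'v \<Rightarrow> 'v \<times> 'v \<Rightarrow> complex"
  assumes "group T" and "finite (carrier T)"
    and "unitary_rep T \<pi>"
    and "involutive_Rmatrix R"
  shows "YB_couple T \<pi> R \<longleftrightarrow> YBE R \<and> ext_reflection T \<pi> R"
proof -
  have RR: "mm R R = mid" and Y: "YBE R" using assms(4) unfolding involutive_Rmatrix_def by auto
  have P1: "\<pi> \<one>\<^bsub>T\<^esub> = mid" and PM: "\<forall>s\<in>carrier T. \<forall>t\<in>carrier T. \<pi> (s \<otimes>\<^bsub>T\<^esub> t) = mm (\<pi> s) (\<pi> t)"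
    using assms(3) unfolding unitary_rep_def by auto
  show ?thesis
  proof
    assume "YB_couple T \<pi> R"
    then show "YBE R \<and> ext_reflection T \<pi> R" using forward_dir[OF assms(1) RR Y P1 PM] Y by blast
  next
    assume "YBE R \<and> ext_reflection T \<pi> R"
    then show "YB_couple T \<pi> R" using converse_dir[OF assms(1) RR Y P1 PM] by blast
  qed
qed


end
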